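(* Let $n\ge 1$ and let $P=P_1\otimes\cdots\otimes P_n\in\mathcal{P}_n$ satisfy $P^2=I$ and $P\neq\pm I$. Then there exists a unique $Z$-circuit $L$ on $n$ qubits such that $L\bullet P=Z\otimes I\otimes\cdots\otimes I$.
   Context: Matrices: $X=\begin{bmatrix}0&1\\1&0\end{bmatrix}$, $Z=\begin{bmatrix}1&0\\0&-1\end{bmatrix}$, $H=\frac{1}{\sqrt2}\begin{bmatrix}1&1\\1&-1\end{bmatrix}$, $CZ=\mathrm{diag}(1,1,1,-1)$. Operators on $n$ qubits act on $(\mathbb{R}^2)^{\otimes n}$, qubit $1$ being the first tensor factor; a one-qubit gate on qubit $i$, or a two-qubit gate on qubits $i,i+1$ (with qubit $i$ the first tensor factor of the gate, called its upper qubit, and $i+1$ its lower qubit), denotes that matrix tensored with identities on the other qubits. For matrices $C,P$, $C\bullet P=CPC^{-1}$. Real Pauli group: $\mathcal{P}_n=\{\pm(P_1\otimes\cdots\otimes P_n)\mid P_i\in\{I,X,Z,XZ\}\}$. A circuit is a finite sequence of gates $g_1,\dots,g_k$ ($g_1$ applied first); its operator is $g_k\cdots g_1$, and we write $L\bullet P$ for (operator of $L$)$\bullet P$. Derived generators (formal symbols, each with a defining gate sequence; within a two-qubit symbol, subscript $1$ is the upper and $2$ the lower qubit; gates separated by commas, ";" separates steps): $A_1$ = empty, $A_2$ = $H$, $A_3$ = empty; $C_1$ = empty, $C_2$ = $H;Z;H$ (i.e. $X$); $B_1=B_5$ = $H_2;\,CZ;\,H_1,H_2;\,CZ;\,H_1,H_2;\,CZ$;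 $B_2=B_6$ = $CZ;\,H_1,H_2;\,CZ$; $B_3=B_7$ = $H_1;\,CZ;\,H_1,H_2;\,CZ$; $B_4=B_8$ = $H_2;\,CZ;\,H_2;\,CZ;\,H_1,H_2;\,CZ$. Symbols with equal defining sequences (e.g. $A_1,A_3$, or $B_1,B_5$) are nevertheless distinct symbols. Types: each of these symbols carries types from $\{\text{single},\text{double}\}$: $A_1,A_2$ have output type single and $A_3$ output type double; $B_j$ has an input type (on its lower qubit) and an output type (on its upper qubit): $B_1,B_2,B_3$ single$\to$single, $B_4$ single$\to$double, $B_5,B_6,B_7$ double$\to$double, $B_8$ double$\to$single; $C_1,C_2$ have input type single. A $Z$-circuit on $n$ qubits is a sequence of symbols of the following form: for some $m\in\{1,\dots,n\}$, a symbol $A_a$ on qubit $m$, then $B_{b_{m-1}}$ on qubits $m-1,m$, then $B_{b_{m-2}}$ on qubits $m-2,m-1$, ..., then $B_{b_1}$ on qubits $1,2$, then $C_c$ on qubit $1$, such that the input type of each $B$ or $C$ symbol equals the output type of the symbol immediately preceding it in this sequence. Two $Z$-circuits are equal when they have the same $m$ and the same sequence of symbols. *)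

theory Defs
  imports "Jordan_Normal_Form.Matrix"
begin

definition kron :: "real mat \<Rightarrow> real mat \<Rightarrow> real mat" where
  "kron A B = mat (dim_row A * dim_row B) (dim_col A * dim_col B)
     (\<lambda>(i,j). A $$ (i div dim_row B, j div dim_col B) * B $$ (i mod dim_row B, j mod dim_col B))"

definition Xm :: "real mat" where "Xm = mat_of_rows_list 2 [[0,1],[1,0]]"
definition Zm :: "real mat" where "Zm = mat_of_rows_list 2 [[1,0],[0,-1]]"
definition Hm :: "real mat" where
  "Hm = mat_of_rows_list 2 [[1/sqrt 2, 1/sqrt 2],[1/sqrt 2, -1/sqrt 2]]"
definition CZm :: "real mat" where
  "CZm = mat_of_rows_list 4 [[1,0,0,0],[0,1,0,0],[0,0,1,0],[0,0,0,-1]]"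

fun tensor_list :: "real mat list \<Rightarrow> real mat" where
  "tensor_list [] = 1\<^sub>m 1"
| "tensor_list (P # Ps) = kron P (tensor_list Ps)"

definition pauli_group :: "nat \<Rightarrow> real mat set" where
  "pauli_group n = {smult_mat s (tensor_list Ps) | s Ps.
      s \<in> {1, -1} \<and> length Ps = n \<and> set Ps \<subseteq> {1\<^sub>m 2, Xm, Zm, Xm * Zm}}"

definition inv_mat :: "real mat \<Rightarrow> real mat" where
  "inv_mat C = (SOME D. D \<in> carrier_mat (dim_row C) (dim_row C) \<and>
      C * D = 1\<^sub>m (dim_row C) \<and> D * C = 1\<^sub>m (dim_row C))"

definition conj_mat :: "real mat \<Rightarrow> real mat \<Rightarrow> real mat" where
  "conj_mat C P = C * P * inv_mat C"

text \<open>Qubits are numbered 1..n. GH i / GZ i: one-qubit gate on qubit i;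
  GCZ i: CZ on qubits i (upper) and i+1 (lower).\<close>
datatype gate = GH nat | GZ nat | GCZ nat

fun gate_mat :: "nat \<Rightarrow> gate \<Rightarrow> real mat" where
  "gate_mat n (GH i) = kron (kron (1\<^sub>m (2^(i-1))) Hm) (1\<^sub>m (2^(n-i)))"
| "gate_mat n (GZ i) = kron (kron (1\<^sub>m (2^(i-1))) Zm) (1\<^sub>m (2^(n-i)))"
| "gate_mat n (GCZ i) = kron (kron (1\<^sub>m (2^(i-1))) CZm) (1\<^sub>m (2^(n-i-1)))"

text \<open>Operator of circuit g_1,...,g_k (g_1 applied first) is g_k \<dots> g_1.\<close>
definition circuit_op :: "nat \<Rightarrow> gate list \<Rightarrow> real mat" where
  "circuit_op n gs = fold (\<lambda>g M. gate_mat n g * M) gs (1\<^sub>m (2^n))"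

datatype asym = A1 | A2 | A3
datatype bsym = B1 | B2 | B3 | B4 | B5 | B6 | B7 | B8
datatype csym = C1 | C2

datatype ty = Single | Double

fun a_out :: "asym \<Rightarrow> ty" where
  "a_out A1 = Single" | "a_out A2 = Single" | "a_out A3 = Double"

fun b_in :: "bsym \<Rightarrow> ty" where
  "b_in B1 = Single" | "b_in B2 = Single" | "b_in B3 = Single" | "b_in B4 = Single"
| "b_in B5 = Double" | "b_in B6 = Double" | "b_in B7 = Double" | "b_in B8 = Double"

fun b_out :: "bsym \<Rightarrow> ty" where
  "b_out B1 = Single" | "b_out B2 = Single" | "b_out B3 = Single" | "b_out B4 = Double"
| "b_out B5 = Double" | "b_out B6 = Double" | "b_out B7 = Double" | "b_out B8 = Single"

fun c_in :: "csym \<Rightarrow> ty" where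
  "c_in C1 = Single" | "c_in C2 = Single"

text \<open>Defining gate sequences; A and C on qubit q, B on qubits i (upper), i+1 (lower).\<close>
fun a_gates :: "asym \<Rightarrow> nat \<Rightarrow> gate list" where
  "a_gates A1 q = []" | "a_gates A2 q = [GH q]" | "a_gates A3 q = []"

fun c_gates :: "csym \<Rightarrow> nat \<Rightarrow> gate list" where
  "c_gates C1 q = []" | "c_gates C2 q = [GH q, GZ q, GH q]"

fun b_gates :: "bsym \<Rightarrow> nat \<Rightarrow> gate list" where
  "b_gates B1 i = [GH (i+1), GCZ i, GH i, GH (i+1), GCZ i, GH i, GH (i+1), GCZ i]"
| "b_gates B5 i = [GH (i+1), GCZ i, GH i, GH (i+1), GCZ i, GH i, GH (i+1), GCZ i]"
| "b_gates B2 i = [GCZ i, GH i, GH (i+1), GCZ i]"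
| "b_gates B6 i = [GCZ i, GH i, GH (i+1), GCZ i]"
| "b_gates B3 i = [GH i, GCZ i, GH i, GH (i+1), GCZ i]"
| "b_gates B7 i = [GH i, GCZ i, GH i, GH (i+1), GCZ i]"
| "b_gates B4 i = [GH (i+1), GCZ i, GH (i+1), GCZ i, GH i, GH (i+1), GCZ i]"
| "b_gates B8 i = [GH (i+1), GCZ i, GH (i+1), GCZ i, GH i, GH (i+1), GCZ i]"

text \<open>A Z-circuit: ZC m a bs c stands for A_a on qubit m, then bs!0 on qubits m-1,m,
  bs!1 on qubits m-2,m-1, ..., bs!(m-2) on qubits 1,2, then C_c on qubit 1.\<close>
datatype zcirc = ZC nat asym "bsym list" csym

fun types_ok :: "ty \<Rightarrow> bsym list \<Rightarrow> csym \<Rightarrow> bool" where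
  "types_ok t [] c = (c_in c = t)"
| "types_ok t (b # bs) c = (b_in b = t \<and> types_ok (b_out b) bs c)"

fun is_zcircuit :: "nat \<Rightarrow> zcirc \<Rightarrow> bool" where
  "is_zcircuit n (ZC m a bs c) =
     (1 \<le> m \<and> m \<le> n \<and> length bs = m - 1 \<and> types_ok (a_out a) bs c)"

fun zcirc_gates :: "zcirc \<Rightarrow> gate list" where
  "zcirc_gates (ZC m a bs c) =
     a_gates a m @ concat (map (\<lambda>k. b_gates (bs ! k) (m - 1 - k)) [0..<length bs]) @ c_gates c 1"

definition zcirc_op :: "nat \<Rightarrow> zcirc \<Rightarrow> real mat" where
  "zcirc_op n L = circuit_op n (zcirc_gates L)"

end

theory Submission
  imports Defs
begin


lemma sum_mult_product':
  "sum h {..<A * B :: nat} = (\<Sum>i\<in>{..<A}. \<Sum>j\<in>{..<B}. h (j + i * B))"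
  unfolding sum.nat_group[of h B A, symmetric]
proof (rule sum.cong, simp, rule sum.reindex_cong)
  fix i
  show "inj_on (\<lambda>j. j + i * B) {..<B}" by (auto intro!: inj_onI)
  show "{i * B..<i * B + B} = (\<lambda>j. j + i * B) ` {..<B}"
  proof safe
    fix j assume "j \<in> {i * B..<i * B + B}"
    then show "j \<in> (\<lambda>j. j + i * B) ` {..<B}"
      by (auto intro!: image_eqI[of _ _ "j - i * B"])
  qed simp
qed simp

lemma kron_dim[simp]: "dim_row (kron A B) = dim_row A * dim_row B" "dim_col (kron A B) = dim_col A * dim_col B"
  by (simp_all add: kron_def)

lemma kron_carrier: "A \<in> carrier_mat ra ca \<Longrightarrow> B \<in> carrier_mat rb cb \<Longrightarrow> kron A B \<in> carrier_mat (ra*rb) (ca*cb)"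
  unfolding carrier_mat_def by simp

lemma kron_index: "i < dim_row A * dim_row B \<Longrightarrow> j < dim_col A * dim_col B \<Longrightarrow>
  kron A B $$ (i,j) = A $$ (i div dim_row B, j div dim_col B) * B $$ (i mod dim_row B, j mod dim_col B)"
  by (simp add: kron_def)

lemma kron_mult:
  assumes A: "A \<in> carrier_mat ra ca" and B: "B \<in> carrier_mat rb cb"
    and C: "C \<in> carrier_mat ca cc" and D: "D \<in> carrier_mat cb cd"
  shows "kron A B * kron C D = kron (A * C) (B * D)"
proof (rule eq_matI)
  fix i j assume i: "i < dim_row (kron (A * C) (B * D))" and j: "j < dim_col (kron (A * C) (B * D))"
  have i': "i < ra * rb" and j': "j < cc * cd" using i j A B C D by auto
  have rb: "rb > 0" using i' by (cases rb) auto
  have cd: "cd > 0" using j' by (cases cd) auto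
  have id: "i div rb < ra" "i mod rb < rb" "j div cd < cc" "j mod cd < cd"
    using i' j' rb cd by (auto simp: less_mult_imp_div_less)
  have "(kron A B * kron C D) $$ (i,j) = (\<Sum>k\<in>{0..<ca*cb}. kron A B $$ (i,k) * kron C D $$ (k,j))"
    using i' j' A B C D by (simp add: scalar_prod_def)
  also have "\<dots> = (\<Sum>k<ca*cb. (A $$ (i div rb, k div cb) * B $$ (i mod rb, k mod cb)) * (C $$ (k div cb, j div cd) * D $$ (k mod cb, j mod cd)))"
    unfolding atLeast0LessThan
    by (rule sum.cong[OF refl]) (use i' j' A B C D in \<open>simp add: kron_index\<close>)
  also have "\<dots> = (\<Sum>x<ca. \<Sum>y<cb. (A $$ (i div rb, x) * C $$ (x, j div cd)) * (B $$ (i mod rb, y) * D $$ (y, j mod cd)))"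
    unfolding sum_mult_product'
  proof (intro sum.cong refl)
    fix x y assume "y \<in> {..<cb}"
    then have "y < cb" by simp
    then have "(y + x*cb) div cb = x" "(y + x*cb) mod cb = y" by auto
    then show "(A $$ (i div rb, (y + x * cb) div cb) * B $$ (i mod rb, (y + x * cb) mod cb)) *
          (C $$ ((y + x * cb) div cb, j div cd) * D $$ ((y + x * cb) mod cb, j mod cd)) =
         (A $$ (i div rb, x) * C $$ (x, j div cd)) * (B $$ (i mod rb, y) * D $$ (y, j mod cd))"
      by (simp only: ac_simps)
  qed
  also have "\<dots> = (\<Sum>x<ca. A $$ (i div rb, x) * C $$ (x, j div cd)) * (\<Sum>y<cb. B $$ (i mod rb, y) * D $$ (y, j mod cd))"
    by (simp add: sum_product)
  also have "\<dots> = (A * C) $$ (i div rb, j div cd) * (B * D) $$ (i mod rb, j mod cd)"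
    using A B C D id by (simp add: scalar_prod_def atLeast0LessThan)
  also have "\<dots> = kron (A * C) (B * D) $$ (i,j)"
    using i' j' A B C D by (simp add: kron_index)
  finally show "(kron A B * kron C D) $$ (i,j) = kron (A * C) (B * D) $$ (i,j)" .
qed (use A B C D in auto)


lemma kron_assoc:
  assumes A: "A \<in> carrier_mat ra ca" and B: "B \<in> carrier_mat rb cb" and C: "C \<in> carrier_mat rc cc"
  shows "kron (kron A B) C = kron A (kron B C)"
proof (rule eq_matI)
  fix i j assume i: "i < dim_row (kron A (kron B C))" and j: "j < dim_col (kron A (kron B C))"
  have i': "i < ra * (rb * rc)" and j': "j < ca * (cb * cc)" using i j A B C by auto
  have rc: "rc > 0" using i' by (cases rc) auto
  have cc: "cc > 0" using j' by (cases cc) auto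
  have rb: "rb > 0" using i' by (cases rb) auto
  have cb: "cb > 0" using j' by (cases cb) auto
  have i2: "i div rc < ra * rb" using i' by (simp add: less_mult_imp_div_less mult.assoc[symmetric])
  have j2: "j div cc < ca * cb" using j' by (simp add: less_mult_imp_div_less mult.assoc[symmetric])
  have i3: "i mod (rb * rc) < rb * rc" using rb rc by simp
  have j3: "j mod (cb * cc) < cb * cc" using cb cc by simp
  have e1: "i div (rb * rc) = i div rc div rb" by (metis div_mult2_eq mult.commute)
  have e2: "j div (cb * cc) = j div cc div cb" by (metis div_mult2_eq mult.commute)
  have e3: "i mod (rb * rc) div rc = i div rc mod rb" "i mod (rb * rc) mod rc = i mod rc"
    using rc by (simp_all add: mod_mult2_eq mult.commute[of rb rc])
  have e4: "j mod (cb * cc) div cc = j div cc mod cb" "j mod (cb * cc) mod cc = j mod cc"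
    using cc by (simp_all add: mod_mult2_eq mult.commute[of cb cc])
  have "kron (kron A B) C $$ (i,j) = kron A B $$ (i div rc, j div cc) * C $$ (i mod rc, j mod cc)"
    using i' j' A B C by (simp add: kron_index mult.assoc)
  also have "\<dots> = A $$ (i div rc div rb, j div cc div cb) * B $$ (i div rc mod rb, j div cc mod cb) * C $$ (i mod rc, j mod cc)"
    using i2 j2 A B by (simp add: kron_index)
  also have "\<dots> = A $$ (i div (rb*rc), j div (cb*cc)) * kron B C $$ (i mod (rb*rc), j mod (cb*cc))"
    using i3 j3 B C by (simp add: kron_index e1 e2 e3 e4)
  also have "\<dots> = kron A (kron B C) $$ (i,j)"
    using i' j' A B C by (simp add: kron_index)
  finally show "kron (kron A B) C $$ (i,j) = kron A (kron B C) $$ (i,j)" .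
qed (use A B C in auto)

lemma kron_one: "kron (1\<^sub>m a) (1\<^sub>m b) = 1\<^sub>m (a * b)"
proof (rule eq_matI)
  fix i j assume i: "i < dim_row (1\<^sub>m (a * b) :: real mat)" and j: "j < dim_col (1\<^sub>m (a * b) :: real mat)"
  then have i': "i < a * b" and j': "j < a * b" by auto
  have b: "b > 0" using i' by (cases b) auto
  have lt: "i div b < a" "j div b < a" "i mod b < b" "j mod b < b"
    using i' j' b by (auto simp: less_mult_imp_div_less)
  have "(i div b = j div b \<and> i mod b = j mod b) = (i = j)"
    by (metis div_mult_mod_eq)
  then show "kron (1\<^sub>m a) (1\<^sub>m b) $$ (i,j) = 1\<^sub>m (a * b) $$ (i,j)"
    using i' j' lt by (auto simp: kron_index)
qed auto

lemma kron_smult_left: "kron (c \<cdot>\<^sub>m A) B = c \<cdot>\<^sub>m kron A B"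
  by (rule eq_matI) (auto simp: kron_index less_mult_imp_div_less)

lemma kron_smult_right: "kron A (c \<cdot>\<^sub>m B) = c \<cdot>\<^sub>m kron A B"
proof (rule eq_matI)
  fix i j assume "i < dim_row (c \<cdot>\<^sub>m kron A B)" "j < dim_col (c \<cdot>\<^sub>m kron A B)"
  then have i: "i < dim_row A * dim_row B" and j: "j < dim_col A * dim_col B" by auto
  have "dim_row B > 0" using i by (cases "dim_row B") auto
  then have 1: "i mod dim_row B < dim_row B" by simp
  have "dim_col B > 0" using j by (cases "dim_col B") auto
  then have 2: "j mod dim_col B < dim_col B" by simp
  show "kron A (c \<cdot>\<^sub>m B) $$ (i, j) = (c \<cdot>\<^sub>m kron A B) $$ (i, j)"
    using i j 1 2 by (simp add: kron_index)
qed auto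

lemma kron_one1_left: "kron (1\<^sub>m 1) A = A"
  by (rule eq_matI) (auto simp: kron_index)

lemma kron_one1_right: "kron A (1\<^sub>m 1) = A"
  by (rule eq_matI) (auto simp: kron_index)


datatype lt = LI | LX | LZ | LY

fun lmat :: "lt \<Rightarrow> real mat" where
  "lmat LI = 1\<^sub>m 2" | "lmat LX = Xm" | "lmat LZ = Zm" | "lmat LY = Xm * Zm"

lemma sum2: "(\<Sum>k\<in>{0..<2::nat}. f k) = f 0 + f 1" by (simp add: numeral_2_eq_2)
lemma sum4: "(\<Sum>k\<in>{0..<4::nat}. f k) = f 0 + f 1 + f 2 + f 3"
  by (simp add: eval_nat_numeral)
lemma lt2: "(i::nat) < 2 \<longleftrightarrow> i = 0 \<or> i = 1" by auto
lemma lt4: "(i::nat) < 4 \<longleftrightarrow> i = 0 \<or> i = 1 \<or> i = 2 \<or> i = 3" by (simp add: eval_nat_numeral less_Suc_eq)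

lemma Xm_c[simp]: "Xm \<in> carrier_mat 2 2" unfolding Xm_def mat_of_rows_list_def by (simp add: eval_nat_numeral)
lemma Zm_c[simp]: "Zm \<in> carrier_mat 2 2" unfolding Zm_def mat_of_rows_list_def by (simp add: eval_nat_numeral)
lemma Hm_c[simp]: "Hm \<in> carrier_mat 2 2" unfolding Hm_def mat_of_rows_list_def by (simp add: eval_nat_numeral)
lemma CZm_c[simp]: "CZm \<in> carrier_mat 4 4" unfolding CZm_def mat_of_rows_list_def by (simp add: eval_nat_numeral)
lemma dims: "dim_row CZm = 4" "dim_col CZm = 4" "dim_row Hm = 2" "dim_col Hm = 2"
  "dim_row Xm = 2" "dim_col Xm = 2" "dim_row Zm = 2" "dim_col Zm = 2"
  using carrier_matD[OF CZm_c] carrier_matD[OF Hm_c] carrier_matD[OF Xm_c] carrier_matD[OF Zm_c] by auto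

lemma mult_c2[simp]: "A \<in> carrier_mat 2 2 \<Longrightarrow> B \<in> carrier_mat 2 2 \<Longrightarrow> A * B \<in> carrier_mat 2 2"
  by (rule mult_carrier_mat)
lemma mult_c4[simp]: "A \<in> carrier_mat 4 4 \<Longrightarrow> B \<in> carrier_mat 4 4 \<Longrightarrow> A * B \<in> carrier_mat 4 4"
  by (rule mult_carrier_mat)
lemma lmat_c[simp]: "lmat x \<in> carrier_mat 2 2" using mult_carrier_mat[OF Xm_c Zm_c] by (cases x) auto
lemma lmat_dims: "dim_row (lmat x) = 2" "dim_col (lmat x) = 2" using carrier_matD[OF lmat_c[of x]] by auto

lemma Xm_e[simp]: "Xm $$ (0,0) = 0" "Xm $$ (0,1) = 1" "Xm $$ (1,0) = 1" "Xm $$ (1,1) = 0" "Xm $$ (0,Suc 0) = 1" "Xm $$ (Suc 0,0) = 1" "Xm $$ (Suc 0,Suc 0) = 0"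
  by (simp_all add: Xm_def mat_of_rows_list_def)
lemma Zm_e[simp]: "Zm $$ (0,0) = 1" "Zm $$ (0,1) = 0" "Zm $$ (1,0) = 0" "Zm $$ (1,1) = -1" "Zm $$ (0,Suc 0) = 0" "Zm $$ (Suc 0,0) = 0" "Zm $$ (Suc 0,Suc 0) = -1"
  by (simp_all add: Zm_def mat_of_rows_list_def)
lemma Hm_e[simp]: "Hm $$ (0,0) = 1/sqrt 2" "Hm $$ (0,1) = 1/sqrt 2" "Hm $$ (1,0) = 1/sqrt 2" "Hm $$ (1,1) = -1/sqrt 2" "Hm $$ (0,Suc 0) = 1/sqrt 2" "Hm $$ (Suc 0,0) = 1/sqrt 2" "Hm $$ (Suc 0,Suc 0) = -1/sqrt 2"
  by (simp_all add: Hm_def mat_of_rows_list_def)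
lemma CZm_e: "i < 4 \<Longrightarrow> j < 4 \<Longrightarrow> CZm $$ (i,j) = (if i = j then (if i = 3 then -1 else 1) else 0)"
  unfolding lt4 CZm_def mat_of_rows_list_def by (auto simp: eval_nat_numeral)

lemma mult2_e: "A \<in> carrier_mat 2 2 \<Longrightarrow> B \<in> carrier_mat 2 2 \<Longrightarrow> i < 2 \<Longrightarrow> j < 2 \<Longrightarrow>
   (A * B) $$ (i,j) = A $$ (i,0) * B $$ (0,j) + A $$ (i,1) * B $$ (1,j)"
  by (simp add: scalar_prod_def sum2)

lemma mat2_eqI: "A \<in> carrier_mat 2 2 \<Longrightarrow> B \<in> carrier_mat 2 2 \<Longrightarrow>
  A $$ (0,0) = B $$ (0,0) \<Longrightarrow> A $$ (0,1) = B $$ (0,1) \<Longrightarrow> A $$ (1,0) = B $$ (1,0) \<Longrightarrow> A $$ (1,1) = B $$ (1,1) \<Longrightarrow> A = B"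
  by (rule eq_matI) (auto simp: lt2)

lemma sqrt2_sq: "(1 / sqrt 2) * (1 / sqrt 2) = (1/2::real)"
  by (simp add: field_simps)

lemma HH: "Hm * Hm = 1\<^sub>m 2"
  by (rule mat2_eqI) (auto simp: mult2_e sqrt2_sq)


definition sg :: "bool \<Rightarrow> real" where "sg b = (if b then -1 else 1)"

fun hact :: "lt \<Rightarrow> bool \<times> lt" where
  "hact LI = (False, LI)" | "hact LX = (False, LZ)" | "hact LZ = (False, LX)" | "hact LY = (True, LY)"
fun zact :: "lt \<Rightarrow> bool \<times> lt" where
  "zact LI = (False, LI)" | "zact LX = (True, LX)" | "zact LZ = (False, LZ)" | "zact LY = (True, LY)"
fun czact :: "lt \<Rightarrow> lt \<Rightarrow> bool \<times> lt \<times> lt" where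
  "czact LI LI = (False, LI, LI)" | "czact LI LX = (False, LZ, LX)" | "czact LI LZ = (False, LI, LZ)" | "czact LI LY = (False, LZ, LY)"
| "czact LX LI = (False, LX, LZ)" | "czact LX LX = (True, LY, LY)" | "czact LX LZ = (False, LX, LI)" | "czact LX LY = (True, LY, LX)"
| "czact LZ LI = (False, LZ, LI)" | "czact LZ LX = (False, LI, LX)" | "czact LZ LZ = (False, LZ, LZ)" | "czact LZ LY = (False, LI, LY)"
| "czact LY LI = (False, LY, LZ)" | "czact LY LX = (True, LX, LY)" | "czact LY LZ = (False, LY, LI)" | "czact LY LY = (True, LX, LX)"

lemma XZ_e[simp]: "(Xm * Zm) $$ (0,0) = 0" "(Xm * Zm) $$ (0,Suc 0) = -1" "(Xm * Zm) $$ (Suc 0,0) = 1" "(Xm * Zm) $$ (Suc 0,Suc 0) = 0"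
  "(Xm * Zm) $$ (0,1) = -1" "(Xm * Zm) $$ (1,0) = 1" "(Xm * Zm) $$ (1,1) = 0"
  by (simp_all add: mult2_e)

lemma one2_e[simp]: "(1\<^sub>m 2 :: real mat) $$ (0,0) = 1" "(1\<^sub>m 2 :: real mat) $$ (0,Suc 0) = 0" "(1\<^sub>m 2 :: real mat) $$ (Suc 0,0) = 0" "(1\<^sub>m 2 :: real mat) $$ (Suc 0,Suc 0) = 1"
  "(1\<^sub>m 2 :: real mat) $$ (0,1) = 0" "(1\<^sub>m 2 :: real mat) $$ (1,0) = 0" "(1\<^sub>m 2 :: real mat) $$ (1,1) = 1"
  by simp_all

lemma smult2_e[simp]: "(c \<cdot>\<^sub>m A) $$ (0,0) = c * A $$ (0,0)" if "A \<in> carrier_mat 2 2" using that by simp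
lemma smult2_e2[simp]: "A \<in> carrier_mat 2 2 \<Longrightarrow> (c \<cdot>\<^sub>m A) $$ (0,Suc 0) = c * A $$ (0,Suc 0)"
  "A \<in> carrier_mat 2 2 \<Longrightarrow> (c \<cdot>\<^sub>m A) $$ (Suc 0,0) = c * A $$ (Suc 0,0)"
  "A \<in> carrier_mat 2 2 \<Longrightarrow> (c \<cdot>\<^sub>m A) $$ (Suc 0,Suc 0) = c * A $$ (Suc 0,Suc 0)"
  by auto

lemma mult2_e'[simp]: "A \<in> carrier_mat 2 2 \<Longrightarrow> B \<in> carrier_mat 2 2 \<Longrightarrow>
   (A * B) $$ (0,0) = A $$ (0,0) * B $$ (0,0) + A $$ (0,Suc 0) * B $$ (Suc 0,0)"
   "A \<in> carrier_mat 2 2 \<Longrightarrow> B \<in> carrier_mat 2 2 \<Longrightarrow>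
   (A * B) $$ (0,Suc 0) = A $$ (0,0) * B $$ (0,Suc 0) + A $$ (0,Suc 0) * B $$ (Suc 0,Suc 0)"
   "A \<in> carrier_mat 2 2 \<Longrightarrow> B \<in> carrier_mat 2 2 \<Longrightarrow>
   (A * B) $$ (Suc 0,0) = A $$ (Suc 0,0) * B $$ (0,0) + A $$ (Suc 0,Suc 0) * B $$ (Suc 0,0)"
   "A \<in> carrier_mat 2 2 \<Longrightarrow> B \<in> carrier_mat 2 2 \<Longrightarrow>
   (A * B) $$ (Suc 0,Suc 0) = A $$ (Suc 0,0) * B $$ (0,Suc 0) + A $$ (Suc 0,Suc 0) * B $$ (Suc 0,Suc 0)"
  by (simp_all add: scalar_prod_def sum2)

lemma mat2_eqI': "A \<in> carrier_mat 2 2 \<Longrightarrow> B \<in> carrier_mat 2 2 \<Longrightarrow>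
  A $$ (0,0) = B $$ (0,0) \<Longrightarrow> A $$ (0,Suc 0) = B $$ (0,Suc 0) \<Longrightarrow> A $$ (Suc 0,0) = B $$ (Suc 0,0) \<Longrightarrow> A $$ (Suc 0,Suc 0) = B $$ (Suc 0,Suc 0) \<Longrightarrow> A = B"
  by (rule eq_matI) (auto simp: lt2)

lemma H_conj: "Hm * lmat x * Hm = sg (fst (hact x)) \<cdot>\<^sub>m lmat (snd (hact x))"
  by (cases x) (auto intro!: mat2_eqI' simp: sg_def sqrt2_sq field_simps)

lemma Z_conj: "Zm * lmat x * Zm = sg (fst (zact x)) \<cdot>\<^sub>m lmat (snd (zact x))"
  by (cases x) (auto intro!: mat2_eqI' simp: sg_def)

lemma ZZ: "Zm * Zm = 1\<^sub>m 2"
  by (auto intro!: mat2_eqI')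

lemma lsq: "lmat x * lmat x = sg (x = LY) \<cdot>\<^sub>m 1\<^sub>m 2"
  by (cases x) (auto intro!: mat2_eqI' simp: sg_def)


definition dcz :: "nat \<Rightarrow> real" where "dcz i = (if i = 3 then -1 else 1)"

lemma CZ_left: "M \<in> carrier_mat 4 4 \<Longrightarrow> CZm * M = mat 4 4 (\<lambda>(i,j). dcz i * M $$ (i,j))"
proof (rule eq_matI)
  fix i j assume M: "M \<in> carrier_mat 4 4" and "i < dim_row (mat 4 4 (\<lambda>(i,j). dcz i * M $$ (i,j)))" "j < dim_col (mat 4 4 (\<lambda>(i,j). dcz i * M $$ (i,j)))"
  then have i: "i < 4" and j: "j < 4" by auto
  have "(CZm * M) $$ (i,j) = (\<Sum>k\<in>{0..<4}. CZm $$ (i,k) * M $$ (k,j))"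
    using M[THEN carrier_matD(1)] M[THEN carrier_matD(2)] CZm_c[THEN carrier_matD(1)] CZm_c[THEN carrier_matD(2)] i j
    by (simp add: scalar_prod_def)
  also have "\<dots> = CZm $$ (i,0) * M $$ (0,j) + CZm $$ (i,1) * M $$ (1,j) + CZm $$ (i,2) * M $$ (2,j) + CZm $$ (i,3) * M $$ (3,j)"
    by (simp add: sum4)
  also have "\<dots> = dcz i * M $$ (i,j)"
    using i by (auto simp: CZm_e dcz_def lt4)
  finally show "(CZm * M) $$ (i,j) = mat 4 4 (\<lambda>(i,j). dcz i * M $$ (i,j)) $$ (i,j)" using i j by simp
qed (auto simp: dims)

lemma CZ_right: "M \<in> carrier_mat 4 4 \<Longrightarrow> M * CZm = mat 4 4 (\<lambda>(i,j). M $$ (i,j) * dcz j)"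
proof (rule eq_matI)
  fix i j assume M: "M \<in> carrier_mat 4 4" and "i < dim_row (mat 4 4 (\<lambda>(i,j). M $$ (i,j) * dcz j))" "j < dim_col (mat 4 4 (\<lambda>(i,j). M $$ (i,j) * dcz j))"
  then have i: "i < 4" and j: "j < 4" by auto
  have "(M * CZm) $$ (i,j) = (\<Sum>k\<in>{0..<4}. M $$ (i,k) * CZm $$ (k,j))"
    using M[THEN carrier_matD(1)] M[THEN carrier_matD(2)] CZm_c[THEN carrier_matD(1)] CZm_c[THEN carrier_matD(2)] i j
    by (simp add: scalar_prod_def)
  also have "\<dots> = M $$ (i,0) * CZm $$ (0,j) + M $$ (i,1) * CZm $$ (1,j) + M $$ (i,2) * CZm $$ (2,j) + M $$ (i,3) * CZm $$ (3,j)"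
    by (simp add: sum4)
  also have "\<dots> = M $$ (i,j) * dcz j"
    using j by (auto simp: CZm_e dcz_def lt4)
  finally show "(M * CZm) $$ (i,j) = mat 4 4 (\<lambda>(i,j). M $$ (i,j) * dcz j) $$ (i,j)" using i j by simp
qed (auto simp: dims)

lemma CZCZ: "CZm * CZm = 1\<^sub>m 4"
  apply (subst CZ_left, simp)
  apply (rule eq_matI)
  apply (auto simp: CZm_e dcz_def)
  done

lemma kron2_c[simp]: "A \<in> carrier_mat 2 2 \<Longrightarrow> B \<in> carrier_mat 2 2 \<Longrightarrow> kron A B \<in> carrier_mat 4 4"
  using kron_carrier[of A 2 2 B 2 2] by simp


fun le :: "lt \<Rightarrow> nat \<Rightarrow> nat \<Rightarrow> real" where
  "le LI i j = (if i = j then 1 else 0)"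
| "le LX i j = (if i \<noteq> j then 1 else 0)"
| "le LZ i j = (if i = j then (if i = 0 then 1 else -1) else 0)"
| "le LY i j = (if i \<noteq> j then (if i = 0 then -1 else 1) else 0)"

lemma lmat_eq: "lmat x = mat 2 2 (\<lambda>(i,j). le x i j)"
  by (cases x) (auto intro!: mat2_eqI')

lemma kron_mat: "kron (mat a b f) (mat c d g) = mat (a*c) (b*d) (\<lambda>(i,j). f (i div c, j div d) * g (i mod c, j mod d))"
proof (rule eq_matI)
  fix i j assume "i < dim_row (mat (a*c) (b*d) (\<lambda>(i,j). f (i div c, j div d) * g (i mod c, j mod d)))"
     "j < dim_col (mat (a*c) (b*d) (\<lambda>(i,j). f (i div c, j div d) * g (i mod c, j mod d)))"
  then have i: "i < a * c" and j: "j < b * d" by auto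
  have "c > 0" using i by (cases c) auto
  have "d > 0" using j by (cases d) auto
  show "kron (mat a b f) (mat c d g) $$ (i,j) = mat (a*c) (b*d) (\<lambda>(i,j). f (i div c, j div d) * g (i mod c, j mod d)) $$ (i,j)"
    using i j \<open>c > 0\<close> \<open>d > 0\<close> by (simp add: kron_index less_mult_imp_div_less)
qed auto

lemma mat4_eqI: "(\<And>i j. i < 4 \<Longrightarrow> j < 4 \<Longrightarrow> F (i,j) = G (i,j)) \<Longrightarrow> mat 4 4 F = mat 4 4 G"
  by (rule eq_matI) auto

lemma all4: "(\<forall>i<4::nat. P i) \<longleftrightarrow> P 0 \<and> P 1 \<and> P 2 \<and> P 3"
  unfolding lt4 by auto

lemma CZ_conj: "CZm * kron (lmat x) (lmat y) * CZm = sg (fst (czact x y)) \<cdot>\<^sub>m kron (lmat (fst (snd (czact x y)))) (lmat (snd (snd (czact x y))))"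
proof -
  have "CZm * kron (lmat x) (lmat y) * CZm = mat 4 4 (\<lambda>(i,j). dcz i * kron (lmat x) (lmat y) $$ (i,j) * dcz j)"
    by (subst CZ_left, simp, subst CZ_right, simp, rule eq_matI, auto)
  also have "\<dots> = mat 4 4 (\<lambda>(i,j). dcz i * (le x (i div 2) (j div 2) * le y (i mod 2) (j mod 2)) * dcz j)"
    unfolding lmat_eq kron_mat by (rule mat4_eqI) auto
  also have "\<dots> = mat 4 4 (\<lambda>(i,j). sg (fst (czact x y)) * (le (fst (snd (czact x y))) (i div 2) (j div 2) * le (snd (snd (czact x y))) (i mod 2) (j mod 2)))"
    apply (rule mat4_eqI)
    apply (simp only: lt4)
    apply (cases x; cases y; elim disjE; simp add: dcz_def sg_def)
    done
  also have "\<dots> = sg (fst (czact x y)) \<cdot>\<^sub>m kron (lmat (fst (snd (czact x y)))) (lmat (snd (snd (czact x y))))"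
    unfolding lmat_eq kron_mat by (rule eq_matI) auto
  finally show ?thesis .
qed


lemma tl_c: "set Ms \<subseteq> carrier_mat 2 2 \<Longrightarrow> tensor_list Ms \<in> carrier_mat (2 ^ length Ms) (2 ^ length Ms)"
proof (induction Ms)
  case Nil then show ?case by simp
next
  case (Cons M Ms)
  then have "kron M (tensor_list Ms) \<in> carrier_mat (2 * 2 ^ length Ms) (2 * 2 ^ length Ms)"
    by (intro kron_carrier) auto
  then show ?case by simp
qed

lemma tl_lmat_c[simp]: "tensor_list (map lmat ps) \<in> carrier_mat (2 ^ length ps) (2 ^ length ps)"
proof -
  have "set (map lmat ps) \<subseteq> carrier_mat 2 2" by auto
  from tl_c[OF this] show ?thesis by simp
qed

lemma tl_append: "set xs \<subseteq> carrier_mat 2 2 \<Longrightarrow> set ys \<subseteq> carrier_mat 2 2 \<Longrightarrow>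
  tensor_list (xs @ ys) = kron (tensor_list xs) (tensor_list ys)"
proof (induction xs)
  case Nil then show ?case using kron_one1_left[of "tensor_list ys"] by simp
next
  case (Cons x xs)
  then have "tensor_list ((x # xs) @ ys) = kron x (kron (tensor_list xs) (tensor_list ys))" by simp
  also have "\<dots> = kron (kron x (tensor_list xs)) (tensor_list ys)"
    using Cons.prems tl_c[of xs] tl_c[of ys] by (intro kron_assoc[symmetric]) auto
  finally show ?case by simp
qed

lemma tl_split1: "tensor_list (map lmat (pre @ [x] @ post)) =
   kron (kron (tensor_list (map lmat pre)) (lmat x)) (tensor_list (map lmat post))"
proof -
  have "tensor_list (map lmat (pre @ [x] @ post)) = kron (tensor_list (map lmat pre)) (kron (lmat x) (tensor_list (map lmat post)))"
    by (subst map_append, subst tl_append) auto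
  also have "\<dots> = kron (kron (tensor_list (map lmat pre)) (lmat x)) (tensor_list (map lmat post))"
    by (rule kron_assoc[symmetric]) auto
  finally show ?thesis .
qed

lemma tl_split2: "tensor_list (map lmat (pre @ [x, y] @ post)) =
   kron (kron (tensor_list (map lmat pre)) (kron (lmat x) (lmat y))) (tensor_list (map lmat post))"
proof -
  have "tensor_list (map lmat (pre @ [x, y] @ post)) = kron (tensor_list (map lmat pre)) (kron (lmat x) (kron (lmat y) (tensor_list (map lmat post))))"
    by (subst map_append, subst tl_append) auto
  also have "\<dots> = kron (tensor_list (map lmat pre)) (kron (kron (lmat x) (lmat y)) (tensor_list (map lmat post)))"
    by (subst kron_assoc[symmetric]) auto
  also have "\<dots> = kron (kron (tensor_list (map lmat pre)) (kron (lmat x) (lmat y))) (tensor_list (map lmat post))"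
    by (rule kron_assoc[symmetric]) (auto intro: kron_carrier)
  finally show ?thesis .
qed

lemma kron3_conj:
  assumes A: "A \<in> carrier_mat p p" and B: "B \<in> carrier_mat q q" and G: "G \<in> carrier_mat d d" and M: "M \<in> carrier_mat d d"
  shows "kron (kron (1\<^sub>m p) G) (1\<^sub>m q) * kron (kron A M) B * kron (kron (1\<^sub>m p) G) (1\<^sub>m q) = kron (kron A (G * M * G)) B"
proof -
  have "kron (kron (1\<^sub>m p) G) (1\<^sub>m q) * kron (kron A M) B = kron (kron (1\<^sub>m p) G * kron A M) (1\<^sub>m q * B)"
    using A B G M by (intro kron_mult[where ca = "p*d" and cb = q]) (auto intro: kron_carrier)
  also have "kron (1\<^sub>m p) G * kron A M = kron A (G * M)"
    using A G M by (subst kron_mult[where ca = p and cb = d]) auto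
  finally have 1: "kron (kron (1\<^sub>m p) G) (1\<^sub>m q) * kron (kron A M) B = kron (kron A (G * M)) B"
    using B by simp
  have "kron (kron A (G * M)) B * kron (kron (1\<^sub>m p) G) (1\<^sub>m q) = kron (kron A (G * M) * kron (1\<^sub>m p) G) (B * 1\<^sub>m q)"
    using A B G M by (intro kron_mult[where ca = "p*d" and cb = q]) (auto intro: kron_carrier)
  also have "kron A (G * M) * kron (1\<^sub>m p) G = kron A (G * M * G)"
    using A G M by (subst kron_mult[where ca = p and cb = d]) auto
  finally show ?thesis using 1 B by simp
qed

lemma smult_smult_mat: "a \<cdot>\<^sub>m (b \<cdot>\<^sub>m A) = (a * b :: real) \<cdot>\<^sub>m A"
  by (rule eq_matI) auto

definition pm :: "bool \<times> lt list \<Rightarrow> real mat" where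
  "pm st = sg (fst st) \<cdot>\<^sub>m tensor_list (map lmat (snd st))"

fun gact :: "gate \<Rightarrow> bool \<times> lt list \<Rightarrow> bool \<times> lt list" where
  "gact (GH i) (s, ps) = (s \<noteq> fst (hact (ps ! (i-1))), ps[i-1 := snd (hact (ps ! (i-1)))])"
| "gact (GZ i) (s, ps) = (s \<noteq> fst (zact (ps ! (i-1))), ps[i-1 := snd (zact (ps ! (i-1)))])"
| "gact (GCZ i) (s, ps) = (s \<noteq> fst (czact (ps ! (i-1)) (ps ! i)),
     ps[i-1 := fst (snd (czact (ps ! (i-1)) (ps ! i))), i := snd (snd (czact (ps ! (i-1)) (ps ! i)))])"

fun valid :: "nat \<Rightarrow> gate \<Rightarrow> bool" where
  "valid n (GH i) = (1 \<le> i \<and> i \<le> n)"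
| "valid n (GZ i) = (1 \<le> i \<and> i \<le> n)"
| "valid n (GCZ i) = (1 \<le> i \<and> i + 1 \<le> n)"

lemma sg_mult: "sg a * sg b = sg (a \<noteq> b)" by (simp add: sg_def)

lemma pow_split1: "1 \<le> i \<Longrightarrow> i \<le> n \<Longrightarrow> 2 ^ (i - 1) * 2 * 2 ^ (n - i) = (2::nat) ^ n"
proof -
  assume "1 \<le> i" "i \<le> n"
  then have "n = (i - 1) + 1 + (n - i)" by simp
  then have "(2::nat) ^ n = 2 ^ (i - 1) * 2 ^ 1 * 2 ^ (n - i)" by (metis power_add)
  then show ?thesis by simp
qed

lemma pow_split2: "1 \<le> i \<Longrightarrow> i + 1 \<le> n \<Longrightarrow> 2 ^ (i - 1) * 4 * 2 ^ (n - i - 1) = (2::nat) ^ n"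
proof -
  assume "1 \<le> i" "i + 1 \<le> n"
  then have "n = (i - 1) + 2 + (n - i - 1)" by simp
  then have "(2::nat) ^ n = 2 ^ (i - 1) * 2 ^ 2 * 2 ^ (n - i - 1)" by (metis power_add)
  then show ?thesis by simp
qed

lemma gate_1q:
  assumes i: "1 \<le> i" "i \<le> length ps" and G: "G \<in> carrier_mat 2 2"
    and conj: "G * lmat (ps ! (i-1)) * G = sg f \<cdot>\<^sub>m lmat y"
  shows "kron (kron (1\<^sub>m (2^(i-1))) G) (1\<^sub>m (2^(length ps - i))) * pm (s, ps) * kron (kron (1\<^sub>m (2^(i-1))) G) (1\<^sub>m (2^(length ps - i)))
    = pm (s \<noteq> f, ps[i-1 := y])"
proof -
  define pre where "pre = take (i-1) ps"
  define post where "post = drop i ps"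
  have ps: "ps = pre @ [ps ! (i-1)] @ post"
  proof -
    have "i - 1 < length ps" using i by simp
    from id_take_nth_drop[OF this] have "ps = take (i-1) ps @ ps ! (i-1) # drop (Suc (i-1)) ps" .
    moreover have "Suc (i-1) = i" using i by simp
    ultimately show ?thesis unfolding pre_def post_def by simp
  qed
  have lp: "length pre = i - 1" "length post = length ps - i" unfolding pre_def post_def using i by auto
  have upd: "ps[i-1 := y] = pre @ [y] @ post"
    unfolding pre_def post_def using i by (simp add: upd_conv_take_nth_drop)
  let ?g = "kron (kron (1\<^sub>m (2^(i-1))) G) (1\<^sub>m (2^(length ps - i)))"
  let ?K = "kron (kron (tensor_list (map lmat pre)) (lmat (ps ! (i-1)))) (tensor_list (map lmat post))"
  have gc: "?g \<in> carrier_mat (2^length ps) (2^length ps)"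
    using kron_carrier[OF kron_carrier[OF one_carrier_mat G] one_carrier_mat, of "2^(i-1)" "2^(length ps - i)"]
      pow_split1[OF i] by simp
  have Kc: "?K \<in> carrier_mat (2^length ps) (2^length ps)"
    using kron_carrier[OF kron_carrier[OF tl_lmat_c[of pre] lmat_c[of "ps ! (i-1)"]] tl_lmat_c[of post]]
      pow_split1[OF i] lp by simp
  have "tensor_list (map lmat ps) = tensor_list (map lmat (pre @ [ps ! (i-1)] @ post))"
    using ps by (rule arg_cong[where f="\<lambda>x. tensor_list (map lmat x)"])
  then have "pm (s, ps) = sg s \<cdot>\<^sub>m ?K"
    unfolding pm_def tl_split1 by simp
  then have "?g * pm (s, ps) * ?g = sg s \<cdot>\<^sub>m (?g * ?K * ?g)"
    by (simp only: mult_smult_distrib[OF gc Kc] mult_smult_assoc_mat[OF mult_carrier_mat[OF gc Kc] gc])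
  also have "?g * ?K * ?g = kron (kron (tensor_list (map lmat pre)) (G * lmat (ps ! (i-1)) * G)) (tensor_list (map lmat post))"
  proof -
    have Tpre: "tensor_list (map lmat pre) \<in> carrier_mat (2^(i-1)) (2^(i-1))" using tl_lmat_c[of pre] lp by simp
    have Tpost: "tensor_list (map lmat post) \<in> carrier_mat (2^(length ps - i)) (2^(length ps - i))" using tl_lmat_c[of post] lp by simp
    show ?thesis by (rule kron3_conj[OF Tpre Tpost G lmat_c])
  qed
  also have "\<dots> = sg f \<cdot>\<^sub>m kron (kron (tensor_list (map lmat pre)) (lmat y)) (tensor_list (map lmat post))"
    unfolding conj by (simp add: kron_smult_left kron_smult_right)
  finally have calc: "?g * pm (s, ps) * ?g = sg s \<cdot>\<^sub>m (sg f \<cdot>\<^sub>m kron (kron (tensor_list (map lmat pre)) (lmat y)) (tensor_list (map lmat post)))" .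
  have "pm (s \<noteq> f, ps[i-1 := y]) = sg (s \<noteq> f) \<cdot>\<^sub>m kron (kron (tensor_list (map lmat pre)) (lmat y)) (tensor_list (map lmat post))"
    unfolding pm_def upd by (simp only: snd_conv fst_conv tl_split1)
  then show ?thesis unfolding calc by (simp add: smult_smult_mat sg_mult)
qed


lemma gate_2q:
  assumes i: "1 \<le> i" "i + 1 \<le> length ps" and G: "G \<in> carrier_mat 4 4"
    and conj: "G * kron (lmat (ps ! (i-1))) (lmat (ps ! i)) * G = sg f \<cdot>\<^sub>m kron (lmat y1) (lmat y2)"
  shows "kron (kron (1\<^sub>m (2^(i-1))) G) (1\<^sub>m (2^(length ps - i - 1))) * pm (s, ps) * kron (kron (1\<^sub>m (2^(i-1))) G) (1\<^sub>m (2^(length ps - i - 1)))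
    = pm (s \<noteq> f, ps[i-1 := y1, i := y2])"
proof -
  define pre where "pre = take (i-1) ps"
  define post where "post = drop (i+1) ps"
  have ps: "ps = pre @ [ps ! (i-1), ps ! i] @ post"
  proof -
    have a: "take i ps = take (i-1) ps @ [ps ! (i-1)]"
      using i take_Suc_conv_app_nth[of "i-1" ps] by simp
    have b: "drop i ps = ps ! i # drop (i+1) ps"
      using i Cons_nth_drop_Suc[of i ps] by simp
    have "ps = take i ps @ drop i ps" by simp
    then show ?thesis unfolding a b pre_def post_def by simp
  qed
  have lp: "length pre = i - 1" "length post = length ps - i - 1" unfolding pre_def post_def using i by auto
  have upd: "ps[i-1 := y1, i := y2] = pre @ [y1, y2] @ post"
  proof -
    have "ps[i-1 := y1, i := y2] = (pre @ [ps ! (i-1), ps ! i] @ post)[i-1 := y1, i := y2]"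
      using ps by simp
    also have "\<dots> = pre @ [y1, y2] @ post"
      using lp i by (auto simp: list_update_append)
    finally show ?thesis .
  qed
  let ?g = "kron (kron (1\<^sub>m (2^(i-1))) G) (1\<^sub>m (2^(length ps - i - 1)))"
  let ?K = "kron (kron (tensor_list (map lmat pre)) (kron (lmat (ps ! (i-1))) (lmat (ps ! i)))) (tensor_list (map lmat post))"
  have Tpre: "tensor_list (map lmat pre) \<in> carrier_mat (2^(i-1)) (2^(i-1))" using tl_lmat_c[of pre] lp by simp
  have Tpost: "tensor_list (map lmat post) \<in> carrier_mat (2^(length ps - i - 1)) (2^(length ps - i - 1))" using tl_lmat_c[of post] lp by simp
  have gc: "?g \<in> carrier_mat (2^length ps) (2^length ps)"
    using kron_carrier[OF kron_carrier[OF one_carrier_mat G] one_carrier_mat, of "2^(i-1)" "2^(length ps - i - 1)"]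
      pow_split2[OF i] by simp
  have Kc: "?K \<in> carrier_mat (2^length ps) (2^length ps)"
    using kron_carrier[OF kron_carrier[OF Tpre kron2_c[OF lmat_c lmat_c]] Tpost]
      pow_split2[OF i] by simp
  have "tensor_list (map lmat ps) = tensor_list (map lmat (pre @ [ps ! (i-1), ps ! i] @ post))"
    using ps by (rule arg_cong[where f="\<lambda>x. tensor_list (map lmat x)"])
  then have "pm (s, ps) = sg s \<cdot>\<^sub>m ?K"
    unfolding pm_def tl_split2 by simp
  then have "?g * pm (s, ps) * ?g = sg s \<cdot>\<^sub>m (?g * ?K * ?g)"
    by (simp only: mult_smult_distrib[OF gc Kc] mult_smult_assoc_mat[OF mult_carrier_mat[OF gc Kc] gc])
  also have "?g * ?K * ?g = kron (kron (tensor_list (map lmat pre)) (G * kron (lmat (ps ! (i-1))) (lmat (ps ! i)) * G)) (tensor_list (map lmat post))"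
    by (rule kron3_conj[OF Tpre Tpost G kron2_c[OF lmat_c lmat_c]])
  also have "\<dots> = sg f \<cdot>\<^sub>m kron (kron (tensor_list (map lmat pre)) (kron (lmat y1) (lmat y2))) (tensor_list (map lmat post))"
    unfolding conj by (simp add: kron_smult_left kron_smult_right)
  finally have calc: "?g * pm (s, ps) * ?g = sg s \<cdot>\<^sub>m (sg f \<cdot>\<^sub>m kron (kron (tensor_list (map lmat pre)) (kron (lmat y1) (lmat y2))) (tensor_list (map lmat post)))" .
  have "pm (s \<noteq> f, ps[i-1 := y1, i := y2]) = sg (s \<noteq> f) \<cdot>\<^sub>m kron (kron (tensor_list (map lmat pre)) (kron (lmat y1) (lmat y2))) (tensor_list (map lmat post))"
    unfolding pm_def upd by (simp only: snd_conv fst_conv tl_split2)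
  then show ?thesis unfolding calc by (simp add: smult_smult_mat sg_mult)
qed

lemma gate_conj: "valid (length ps) g \<Longrightarrow> gate_mat (length ps) g * pm (s, ps) * gate_mat (length ps) g = pm (gact g (s, ps))"
proof (cases g)
  case (GH i)
  assume "valid (length ps) g"
  then show ?thesis unfolding GH using gate_1q[OF _ _ Hm_c H_conj] by simp
next
  case (GZ i)
  assume "valid (length ps) g"
  then show ?thesis unfolding GZ using gate_1q[OF _ _ Zm_c Z_conj] by simp
next
  case (GCZ i)
  assume "valid (length ps) g"
  then show ?thesis unfolding GCZ using gate_2q[OF _ _ CZm_c CZ_conj] by simp
qed

lemma gate_c: "valid n g \<Longrightarrow> gate_mat n g \<in> carrier_mat (2^n) (2^n)"
proof (cases g)
  case (GH i)
  assume "valid n g"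
  then show ?thesis unfolding GH
    using kron_carrier[OF kron_carrier[OF one_carrier_mat Hm_c] one_carrier_mat, of "2^(i-1)" "2^(n - i)"] pow_split1[of i n] by simp
next
  case (GZ i)
  assume "valid n g"
  then show ?thesis unfolding GZ
    using kron_carrier[OF kron_carrier[OF one_carrier_mat Zm_c] one_carrier_mat, of "2^(i-1)" "2^(n - i)"] pow_split1[of i n] by simp
next
  case (GCZ i)
  assume "valid n g"
  then show ?thesis unfolding GCZ
    using kron_carrier[OF kron_carrier[OF one_carrier_mat CZm_c] one_carrier_mat, of "2^(i-1)" "2^(n - i - 1)"] pow_split2[of i n] by simp
qed

lemma kron3_sq: "G \<in> carrier_mat d d \<Longrightarrow> G * G = 1\<^sub>m d \<Longrightarrow>
  kron (kron (1\<^sub>m p) G) (1\<^sub>m q) * kron (kron (1\<^sub>m p) G) (1\<^sub>m q) = 1\<^sub>m (p * d * q)"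
proof -
  assume G: "G \<in> carrier_mat d d" and GG: "G * G = 1\<^sub>m d"
  have "kron (kron (1\<^sub>m p) G) (1\<^sub>m q) * kron (kron (1\<^sub>m p) G) (1\<^sub>m q) = kron (kron (1\<^sub>m p) G * kron (1\<^sub>m p) G) (1\<^sub>m q * 1\<^sub>m q)"
    using G by (intro kron_mult[where ca = "p*d" and cb = q]) (auto intro: kron_carrier)
  also have "kron (1\<^sub>m p) G * kron (1\<^sub>m p) G = kron (1\<^sub>m p) (1\<^sub>m d)"
    using G GG by (subst kron_mult[where ca = p and cb = d]) auto
  finally show ?thesis by (simp add: kron_one)
qed

lemma gate_sq: "valid n g \<Longrightarrow> gate_mat n g * gate_mat n g = 1\<^sub>m (2^n)"
proof (cases g)
  case (GH i)
  assume "valid n g"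
  then show ?thesis unfolding GH using kron3_sq[OF Hm_c HH, of "2^(i-1)" "2^(n-i)"] pow_split1[of i n] by simp
next
  case (GZ i)
  assume "valid n g"
  then show ?thesis unfolding GZ using kron3_sq[OF Zm_c ZZ, of "2^(i-1)" "2^(n-i)"] pow_split1[of i n] by simp
next
  case (GCZ i)
  assume "valid n g"
  then show ?thesis unfolding GCZ using kron3_sq[OF CZm_c CZCZ, of "2^(i-1)" "2^(n-i-1)"] pow_split2[of i n] by simp
qed


lemma assoc_sq: "A \<in> carrier_mat N N \<Longrightarrow> B \<in> carrier_mat N N \<Longrightarrow> C \<in> carrier_mat N N \<Longrightarrow> A * B * C = A * (B * C)"
  by (rule assoc_mult_mat)
lemma mult_sq_c: "A \<in> carrier_mat N N \<Longrightarrow> B \<in> carrier_mat N N \<Longrightarrow> A * B \<in> carrier_mat N N"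
  by (rule mult_carrier_mat)

definition gacts :: "gate list \<Rightarrow> bool \<times> lt list \<Rightarrow> bool \<times> lt list" where
  "gacts gs st = fold gact gs st"

lemma gact_len[simp]: "length (snd (gact g st)) = length (snd st)"
  by (cases st; cases g) auto

lemma gacts_len[simp]: "length (snd (gacts gs st)) = length (snd st)"
  unfolding gacts_def by (induction gs arbitrary: st) auto

lemma gacts_append: "gacts (xs @ ys) st = gacts ys (gacts xs st)"
  unfolding gacts_def by simp

lemma gacts_snoc: "gacts (xs @ [g]) st = gact g (gacts xs st)"
  unfolding gacts_def by simp

lemma pm_c: "pm st \<in> carrier_mat (2 ^ length (snd st)) (2 ^ length (snd st))"
  unfolding pm_def by simp

lemma cop_snoc: "circuit_op n (gs @ [g]) = gate_mat n g * circuit_op n gs"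
  unfolding circuit_op_def by simp

lemma cop_c: "\<forall>g\<in>set gs. valid n g \<Longrightarrow> circuit_op n gs \<in> carrier_mat (2^n) (2^n)"
proof (induction gs rule: rev_induct)
  case Nil then show ?case by (simp add: circuit_op_def)
next
  case (snoc g gs)
  then show ?case unfolding cop_snoc using gate_c[of n g] by (auto intro: mult_carrier_mat)
qed

lemma fold_op: "\<forall>g\<in>set gs. valid n g \<Longrightarrow> M \<in> carrier_mat (2^n) k \<Longrightarrow>
  fold (\<lambda>g M. gate_mat n g * M) gs M = circuit_op n gs * M"
proof (induction gs arbitrary: M k)
  case Nil then show ?case by (simp add: circuit_op_def)
next
  case (Cons g gs)
  have gc: "gate_mat n g \<in> carrier_mat (2^n) (2^n)" using Cons.prems gate_c by auto
  have cc: "circuit_op n gs \<in> carrier_mat (2^n) (2^n)" using Cons.prems cop_c by auto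
  have gM: "gate_mat n g * M \<in> carrier_mat (2^n) k" using gc Cons.prems by (auto intro: mult_carrier_mat)
  have "fold (\<lambda>g M. gate_mat n g * M) (g # gs) M = fold (\<lambda>g M. gate_mat n g * M) gs (gate_mat n g * M)" by simp
  also have "\<dots> = circuit_op n gs * (gate_mat n g * M)"
    using Cons.prems gM by (intro Cons.IH) auto
  finally have "fold (\<lambda>g M. gate_mat n g * M) (g # gs) M = circuit_op n gs * (gate_mat n g * M)" .
  moreover have "circuit_op n (g # gs) = circuit_op n gs * gate_mat n g"
  proof -
    have "circuit_op n (g # gs) = fold (\<lambda>g M. gate_mat n g * M) gs (gate_mat n g * 1\<^sub>m (2^n))"
      unfolding circuit_op_def by simp
    also have "\<dots> = circuit_op n gs * (gate_mat n g * 1\<^sub>m (2^n))"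
      using Cons gc by (intro Cons.IH) auto
    finally show ?thesis using gc by simp
  qed
  ultimately show ?case using gc cc Cons.prems by simp
qed

lemma cop_cons: "\<forall>g\<in>set (g # gs). valid n g \<Longrightarrow> circuit_op n (g # gs) = circuit_op n gs * gate_mat n g"
proof -
  assume v: "\<forall>g\<in>set (g # gs). valid n g"
  have gc: "gate_mat n g \<in> carrier_mat (2^n) (2^n)" using v gate_c by auto
  have "circuit_op n (g # gs) = fold (\<lambda>g M. gate_mat n g * M) gs (gate_mat n g * 1\<^sub>m (2^n))"
    unfolding circuit_op_def by simp
  also have "\<dots> = circuit_op n gs * (gate_mat n g * 1\<^sub>m (2^n))"
    using v gc by (intro fold_op) auto
  finally show ?thesis using gc by simp
qed

lemma cop_inv: "\<forall>g\<in>set gs. valid n g \<Longrightarrow>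
  circuit_op n gs * circuit_op n (rev gs) = 1\<^sub>m (2^n) \<and> circuit_op n (rev gs) * circuit_op n gs = 1\<^sub>m (2^n)"
proof (induction gs)
  case Nil then show ?case by (simp add: circuit_op_def)
next
  case (Cons g gs)
  have gc: "gate_mat n g \<in> carrier_mat (2^n) (2^n)" using Cons.prems gate_c by auto
  have gg: "gate_mat n g * gate_mat n g = 1\<^sub>m (2^n)" using Cons.prems gate_sq by auto
  have v: "\<forall>g\<in>set gs. valid n g" using Cons.prems by auto
  have cc: "circuit_op n gs \<in> carrier_mat (2^n) (2^n)" using v cop_c by auto
  have cr: "circuit_op n (rev gs) \<in> carrier_mat (2^n) (2^n)" using v cop_c[of "rev gs"] by auto
  have e1: "circuit_op n (g # gs) = circuit_op n gs * gate_mat n g" using Cons.prems cop_cons by blast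
  have e2: "circuit_op n (rev (g # gs)) = gate_mat n g * circuit_op n (rev gs)" by (simp add: cop_snoc)
  have IH: "circuit_op n gs * circuit_op n (rev gs) = 1\<^sub>m (2^n)" "circuit_op n (rev gs) * circuit_op n gs = 1\<^sub>m (2^n)"
    using Cons.IH v by auto
  have "circuit_op n gs * gate_mat n g * (gate_mat n g * circuit_op n (rev gs)) = circuit_op n gs * (gate_mat n g * gate_mat n g) * circuit_op n (rev gs)"
    using gc cc cr by (simp add: assoc_sq[where N="2^n"] mult_sq_c[where N="2^n"])
  also have "\<dots> = 1\<^sub>m (2^n)" using gg IH cc by simp
  finally have 1: "circuit_op n gs * gate_mat n g * (gate_mat n g * circuit_op n (rev gs)) = 1\<^sub>m (2^n)" .
  have "gate_mat n g * circuit_op n (rev gs) * (circuit_op n gs * gate_mat n g) = gate_mat n g * (circuit_op n (rev gs) * circuit_op n gs) * gate_mat n g"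
    using gc cc cr by (simp add: assoc_sq[where N="2^n"] mult_sq_c[where N="2^n"])
  also have "\<dots> = 1\<^sub>m (2^n)" using gg IH gc by simp
  finally have 2: "gate_mat n g * circuit_op n (rev gs) * (circuit_op n gs * gate_mat n g) = 1\<^sub>m (2^n)" .
  show ?case unfolding e1 e2 using 1 2 by simp
qed

lemma inv_mat_cop: "\<forall>g\<in>set gs. valid n g \<Longrightarrow> inv_mat (circuit_op n gs) = circuit_op n (rev gs)"
proof -
  assume v: "\<forall>g\<in>set gs. valid n g"
  have cc: "circuit_op n gs \<in> carrier_mat (2^n) (2^n)" using v cop_c by auto
  have cr: "circuit_op n (rev gs) \<in> carrier_mat (2^n) (2^n)" using v cop_c[of "rev gs"] by auto
  note inv = cop_inv[OF v]
  have dr: "dim_row (circuit_op n gs) = 2^n" using cc by auto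
  show ?thesis
    unfolding inv_mat_def dr
  proof (rule some_equality)
    show "circuit_op n (rev gs) \<in> carrier_mat (2^n) (2^n) \<and> circuit_op n gs * circuit_op n (rev gs) = 1\<^sub>m (2^n) \<and> circuit_op n (rev gs) * circuit_op n gs = 1\<^sub>m (2^n)"
      using cr inv by auto
  next
    fix D assume D: "D \<in> carrier_mat (2^n) (2^n) \<and> circuit_op n gs * D = 1\<^sub>m (2^n) \<and> D * circuit_op n gs = 1\<^sub>m (2^n)"
    from D have Dc: "D \<in> carrier_mat (2^n) (2^n)" and D1: "circuit_op n gs * D = 1\<^sub>m (2^n)" by auto
    have "D = 1\<^sub>m (2^n) * D" using Dc by simp
    also have "\<dots> = (circuit_op n (rev gs) * circuit_op n gs) * D" using inv by simp
    also have "\<dots> = circuit_op n (rev gs) * (circuit_op n gs * D)" using cr cc Dc by (rule assoc_sq)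
    also have "\<dots> = circuit_op n (rev gs)" using D1 cr by simp
    finally show "D = circuit_op n (rev gs)" .
  qed
qed

lemma conj_cop: "\<forall>g\<in>set gs. valid (length ps) g \<Longrightarrow>
  circuit_op (length ps) gs * pm (s, ps) * circuit_op (length ps) (rev gs) = pm (gacts gs (s, ps))"
proof (induction gs rule: rev_induct)
  case Nil
  have "pm (s, ps) \<in> carrier_mat (2 ^ length ps) (2 ^ length ps)" using pm_c[of "(s,ps)"] by simp
  then show ?case by (simp add: circuit_op_def gacts_def)
next
  case (snoc g gs)
  let ?n = "length ps"
  have v: "\<forall>g\<in>set gs. valid ?n g" and vg: "valid ?n g" using snoc.prems by auto
  have gc: "gate_mat ?n g \<in> carrier_mat (2^?n) (2^?n)" using vg gate_c by auto
  have cc: "circuit_op ?n gs \<in> carrier_mat (2^?n) (2^?n)" using v cop_c by auto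
  have cr: "circuit_op ?n (rev gs) \<in> carrier_mat (2^?n) (2^?n)" using v cop_c[of "rev gs"] by auto
  have pc: "pm (s, ps) \<in> carrier_mat (2^?n) (2^?n)" using pm_c[of "(s,ps)"] by simp
  have e1: "circuit_op ?n (rev (gs @ [g])) = circuit_op ?n (rev gs) * gate_mat ?n g"
    using cop_cons[of g "rev gs" ?n] snoc.prems by auto
  have "circuit_op ?n (gs @ [g]) * pm (s, ps) * circuit_op ?n (rev (gs @ [g])) =
      gate_mat ?n g * (circuit_op ?n gs * pm (s, ps) * circuit_op ?n (rev gs)) * gate_mat ?n g"
    unfolding e1 cop_snoc using gc cc cr pc by (simp add: assoc_sq[where N="2^?n"] mult_sq_c[where N="2^?n"])
  also have "\<dots> = gate_mat ?n g * pm (gacts gs (s, ps)) * gate_mat ?n g" using snoc.IH v by simp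
  also have "\<dots> = pm (gacts (gs @ [g]) (s, ps))"
  proof -
    obtain s' ps' where st: "gacts gs (s, ps) = (s', ps')" by (cases "gacts gs (s, ps)")
    have l: "length ps' = ?n" using gacts_len[of gs "(s,ps)"] st by simp
    show ?thesis unfolding gacts_snoc st using gate_conj[of ps' g s'] vg l by simp
  qed
  finally show ?case .
qed


fun shiftg :: "nat \<Rightarrow> gate \<Rightarrow> gate" where
  "shiftg k (GH i) = GH (k + i)" | "shiftg k (GZ i) = GZ (k + i)" | "shiftg k (GCZ i) = GCZ (k + i)"

lemma b_gates_shift: "b_gates b (k + 1) = map (shiftg k) (b_gates b 1)"
  by (cases b) simp_all

lemma c_gates_shift0: "map (shiftg 0) gs = gs"
proof -
  have "shiftg 0 g = g" for g by (cases g) simp_all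
  then show ?thesis by (induction gs) simp_all
qed

lemma gact_shift:
  assumes "valid (length mid) g" "length pre = k"
  shows "gact (shiftg k g) (s, pre @ mid @ post) = (fst (gact g (s, mid)), pre @ snd (gact g (s, mid)) @ post)"
  using assms by (cases g) (auto simp: nth_append list_update_append)

lemma gacts_shift:
  "\<forall>g\<in>set gs. valid (length mid) g \<Longrightarrow> length pre = k \<Longrightarrow>
   gacts (map (shiftg k) gs) (s, pre @ mid @ post) = (fst (gacts gs (s, mid)), pre @ snd (gacts gs (s, mid)) @ post)"
proof (induction gs arbitrary: s mid)
  case Nil then show ?case by (simp add: gacts_def)
next
  case (Cons g gs)
  obtain s1 mid1 where g1: "gact g (s, mid) = (s1, mid1)" by (cases "gact g (s, mid)")
  have l1: "length mid1 = length mid" using gact_len[of g "(s,mid)"] g1 by simp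
  have "gacts (map (shiftg k) (g # gs)) (s, pre @ mid @ post) = gacts (map (shiftg k) gs) (gact (shiftg k g) (s, pre @ mid @ post))"
    by (simp add: gacts_def)
  also have "gact (shiftg k g) (s, pre @ mid @ post) = (s1, pre @ mid1 @ post)"
    using gact_shift[of mid g pre k s post] Cons.prems g1 by simp
  also have "gacts (map (shiftg k) gs) (s1, pre @ mid1 @ post) = (fst (gacts gs (s1, mid1)), pre @ snd (gacts gs (s1, mid1)) @ post)"
    using Cons.IH[of mid1 s1] Cons.prems l1 by simp
  also have "gacts gs (s1, mid1) = gacts (g # gs) (s, mid)" using g1 by (simp add: gacts_def)
  finally show ?case .
qed

definition bst :: "bsym \<Rightarrow> bool \<Rightarrow> lt \<Rightarrow> lt \<Rightarrow> bool \<times> lt list" where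
  "bst b s u l = gacts (b_gates b 1) (s, [u, l])"

definition cst :: "csym \<Rightarrow> bool \<Rightarrow> lt \<Rightarrow> bool \<times> lt list" where
  "cst c s l = gacts (c_gates c 1) (s, [l])"

lemma bst_len: "length (snd (bst b s u l)) = 2"
  unfolding bst_def using gacts_len[of "b_gates b 1" "(s, [u, l])"] by simp

lemma cst_len: "length (snd (cst c s l)) = 1"
  unfolding cst_def using gacts_len[of "c_gates c 1" "(s, [l])"] by simp

fun ok :: "bsym list \<Rightarrow> csym \<Rightarrow> bool \<Rightarrow> lt list \<Rightarrow> lt \<Rightarrow> bool" where
  "ok [] c s [] l = (cst c s l = (False, [LZ]))"
| "ok (b # bs) c s (u # rpre) l = (snd (bst b s u l) ! 1 = LI \<and> ok bs c (fst (bst b s u l)) rpre (snd (bst b s u l) ! 0))"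
| "ok _ _ _ _ _ = False"

definition tg :: "bsym list \<Rightarrow> nat \<Rightarrow> gate list" where
  "tg bs m = concat (map (\<lambda>k. b_gates (bs ! k) (m - 1 - k)) [0..<length bs])"

lemma tg_nil[simp]: "tg [] m = []" by (simp add: tg_def)

lemma tg_cons: "tg (b # bs) m = b_gates b (m - 1) @ tg bs (m - 1)"
proof -
  have "[0..<length (b # bs)] = 0 # map Suc [0..<length bs]"
    by (simp add: map_Suc_upt upt_conv_Cons del: upt_Suc)
  then show ?thesis unfolding tg_def by (simp add: o_def)
qed

lemma rep_iff: "(xs = replicate (length xs) a) \<longleftrightarrow> set xs \<subseteq> {a}"
  by (induction xs) auto

lemma bvalid: "g \<in> set (b_gates b 1) \<Longrightarrow> valid 2 g"
  by (cases b) auto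

lemma cvalid: "g \<in> set (c_gates c 1) \<Longrightarrow> valid 1 g"
  by (cases c) auto

lemma tail:
  "length bs = length rpre \<Longrightarrow>
   (gacts (tg bs (Suc (length rpre)) @ c_gates c 1) (s, rev rpre @ [l] @ post) = (False, LZ # replicate (length rpre + length post) LI))
   \<longleftrightarrow> (ok bs c s rpre l \<and> set post \<subseteq> {LI})"
proof (induction bs arbitrary: rpre s l post)
  case Nil
  then have r: "rpre = []" by simp
  have "gacts (c_gates c 1) (s, [] @ [l] @ post) = (fst (cst c s l), [] @ snd (cst c s l) @ post)"
    unfolding cst_def using gacts_shift[of "c_gates c 1" "[l]" "[]" 0 s post] cvalid c_gates_shift0 by auto
  moreover obtain r0 where "snd (cst c s l) = [r0]" using cst_len[of c s l] by (cases "snd (cst c s l)") auto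
  ultimately show ?case using r rep_iff[of post LI]
    by (cases "cst c s l") (auto simp: eq_commute[of post])
next
  case (Cons b bs)
  then obtain u rest where r: "rpre = u # rest" by (cases rpre) auto
  have lr: "length bs = length rest" using Cons.prems r by simp
  obtain s' r0 r1 where B: "bst b s u l = (s', [r0, r1])"
    using bst_len[of b s u l] by (cases "bst b s u l"; cases "snd (bst b s u l)" rule: list.exhaust; auto simp: length_Suc_conv)
  have "gacts (b_gates b (length rest + 1)) (s, rev rest @ [u, l] @ post) = (s', rev rest @ [r0, r1] @ post)"
  proof -
    have bv: "\<forall>g\<in>set (b_gates b 1). valid (length [u, l]) g" by (cases b) auto
    show ?thesis
      using gacts_shift[OF bv, of "rev rest" "length rest" s post] B
      unfolding b_gates_shift bst_def by simp
  qed
  then have "gacts (tg (b # bs) (Suc (length rpre)) @ c_gates c 1) (s, rev rpre @ [l] @ post)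
     = gacts (tg bs (Suc (length rest)) @ c_gates c 1) (s', rev rest @ [r0] @ (r1 # post))"
    unfolding r tg_cons by (simp add: gacts_append)
  then show ?case
    using Cons.IH[OF lr, of s' r0 "r1 # post"] B r by auto
qed


fun low :: "ty \<Rightarrow> lt" where "low Single = LZ" | "low Double = LY"

fun bsel :: "ty \<Rightarrow> lt \<Rightarrow> bsym" where
  "bsel Single LI = B1" | "bsel Single LX = B2" | "bsel Single LZ = B3" | "bsel Single LY = B4"
| "bsel Double LI = B5" | "bsel Double LX = B6" | "bsel Double LZ = B7" | "bsel Double LY = B8"

definition yodd :: "lt list \<Rightarrow> bool" where "yodd xs = odd (length (filter (\<lambda>x. x = LY) xs))"

lemma T1: "l \<noteq> LI \<Longrightarrow> l \<noteq> low (b_in b) \<Longrightarrow> snd (bst b s u l) ! 1 = LI \<Longrightarrow>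
  snd (bst b s u l) ! 0 \<noteq> LI \<and> snd (bst b s u l) ! 0 \<noteq> low (b_out b)"
  by (cases b; cases u; cases l) (simp_all add: bst_def gacts_def)


lemma T2: "bst b s LI LI = (s, [LI, LI])"
  by (cases b) (simp_all add: bst_def gacts_def)

lemma T2': "u \<noteq> LI \<Longrightarrow> snd (bst b s u LI) ! 1 \<noteq> LI"
  by (cases b; cases u) (simp_all add: bst_def gacts_def)

lemma T3: "l = low (b_in b) \<Longrightarrow> snd (bst b s u l) ! 1 = LI \<Longrightarrow>
  b = bsel (b_in b) u \<and> snd (bst b s u l) ! 0 = low (b_out b)"
  by (cases b; cases u) (simp_all add: bst_def gacts_def)

lemma T4: "snd (bst (bsel t u) s u (low t)) ! 1 = LI \<and> snd (bst (bsel t u) s u (low t)) ! 0 = low (b_out (bsel t u))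
  \<and> b_in (bsel t u) = t \<and> ((u = LY) \<noteq> (low t = LY) \<longleftrightarrow> snd (bst (bsel t u) s u (low t)) ! 0 = LY)"
  by (cases t; cases u) (simp_all add: bst_def gacts_def)

lemma CB1: "cst c s l = (False, [LZ]) \<Longrightarrow> l = LZ"
  by (cases c; cases l; cases s) (simp_all add: cst_def gacts_def)

lemma CB3: "cst c s LZ = (False, [LZ]) \<longleftrightarrow> c = (if s then C2 else C1)"
  by (cases c; cases s) (simp_all add: cst_def gacts_def)

lemma C1: "l \<noteq> LI \<Longrightarrow> l \<noteq> low t \<Longrightarrow> types_ok t bs c \<Longrightarrow> length bs = length rpre \<Longrightarrow> \<not> ok bs c s rpre l"
proof (induction bs arbitrary: t s rpre l)
  case Nil
  then have "rpre = []" by simp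
  moreover have "c_in c = t" using Nil by simp
  ultimately show ?case using Nil CB1[of c s l] by (cases c) auto
next
  case (Cons b bs)
  then obtain u rest where r: "rpre = u # rest" by (cases rpre) auto
  have t: "b_in b = t" "types_ok (b_out b) bs c" using Cons.prems by auto
  show ?case
  proof
    assume o: "ok (b # bs) c s rpre l"
    then have 1: "snd (bst b s u l) ! 1 = LI" and 2: "ok bs c (fst (bst b s u l)) rest (snd (bst b s u l) ! 0)"
      using r by auto
    from T1[OF Cons.prems(1) _ 1] Cons.prems(2) t(1)
    have "snd (bst b s u l) ! 0 \<noteq> LI" "snd (bst b s u l) ! 0 \<noteq> low (b_out b)" by auto
    from Cons.IH[OF this t(2)] Cons.prems(4) r 2 show False by simp
  qed
qed

lemma C2: "length bs = length rpre \<Longrightarrow> \<not> ok bs c s rpre LI"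
proof (induction bs arbitrary: s rpre)
  case Nil
  then show ?case using CB1[of c s LI] by auto
next
  case (Cons b bs)
  then obtain u rest where r: "rpre = u # rest" by (cases rpre) auto
  show ?case
  proof (cases "u = LI")
    case True
    then show ?thesis using Cons.IH[of rest s] Cons.prems r T2[of b s] by simp
  next
    case False
    then show ?thesis using T2'[of u b s] r by simp
  qed
qed

lemma C3: "l = low t \<Longrightarrow> types_ok t bs c \<Longrightarrow> types_ok t bs' c' \<Longrightarrow> length bs = length rpre \<Longrightarrow> length bs' = length rpre \<Longrightarrow>
  ok bs c s rpre l \<Longrightarrow> ok bs' c' s rpre l \<Longrightarrow> bs = bs' \<and> c = c'"
proof (induction bs arbitrary: bs' t s rpre l)
  case Nil
  then have "rpre = []" "bs' = []" by auto
  then show ?case using Nil CB1[of c s l] CB3[of c s] CB3[of c' s] by auto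
next
  case (Cons b bs)
  then obtain u rest where r: "rpre = u # rest" by (cases rpre) auto
  from Cons.prems obtain b' bs1 where b': "bs' = b' # bs1" by (cases bs') auto
  have t: "b_in b = t" "types_ok (b_out b) bs c" "b_in b' = t" "types_ok (b_out b') bs1 c'"
    using Cons.prems b' by auto
  have o1: "snd (bst b s u l) ! 1 = LI" "ok bs c (fst (bst b s u l)) rest (snd (bst b s u l) ! 0)"
    using Cons.prems r by auto
  have o2: "snd (bst b' s u l) ! 1 = LI" "ok bs1 c' (fst (bst b' s u l)) rest (snd (bst b' s u l) ! 0)"
    using Cons.prems r b' by auto
  have e1: "b = bsel t u" "snd (bst b s u l) ! 0 = low (b_out b)"
    using T3[of l b s u] o1(1) t(1) Cons.prems(1) by auto
  have e2: "b' = bsel t u"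
    using T3[of l b' s u] o2(1) t(3) Cons.prems(1) by auto
  have bb: "b = b'" using e1 e2 by simp
  have "bs = bs1 \<and> c = c'"
    using Cons.IH[where bs'=bs1 and t="b_out b" and s="fst (bst b s u l)" and rpre=rest and l="snd (bst b s u l) ! 0"]
      e1(2) t(2) t(4) bb Cons.prems(4,5) r b' o1(2) o2(2) by simp
  then show ?case using bb b' by simp
qed

lemma yodd_cons: "yodd (x # xs) = ((x = LY) \<noteq> yodd xs)"
  unfolding yodd_def by auto

lemma C4: "l = low t \<Longrightarrow> \<not> yodd (l # rpre) \<Longrightarrow> \<exists>bs c. types_ok t bs c \<and> length bs = length rpre \<and> ok bs c s rpre l"
proof (induction rpre arbitrary: t s l)
  case Nil
  then have "t = Single" by (cases t) (auto simp: yodd_def)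
  then show ?case using Nil CB3[of "if s then C2 else C1" s]
    by (intro exI[of _ "[]"] exI[of _ "if s then C2 else C1"]) auto
next
  case (Cons u rest)
  let ?b = "bsel t u"
  note T = T4[of t u s]
  have "\<not> yodd (snd (bst ?b s u l) ! 0 # rest)"
    using Cons.prems T by (auto simp: yodd_cons)
  from Cons.IH[OF _ this] T obtain bs c where
    h: "types_ok (b_out ?b) bs c" "length bs = length rest" "ok bs c (fst (bst ?b s u l)) rest (snd (bst ?b s u l) ! 0)"
    using Cons.prems by blast
  show ?case
    using h T Cons.prems by (intro exI[of _ "?b # bs"] exI[of _ c]) auto
qed


definition ast :: "asym \<Rightarrow> lt \<Rightarrow> bool \<times> lt" where
  "ast a x = (case a of A2 \<Rightarrow> hact x | _ \<Rightarrow> (False, x))"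

fun asel :: "lt \<Rightarrow> asym" where
  "asel LZ = A1" | "asel LX = A2" | "asel LY = A3" | "asel LI = A1"

lemma ast_LI: "snd (ast a x) = LI \<longleftrightarrow> x = LI"
  by (cases a; cases x) (simp_all add: ast_def)

lemma ast_sel: "x \<noteq> LI \<Longrightarrow> snd (ast a x) = low (a_out a) \<Longrightarrow> a = asel x"
  by (cases a; cases x) (simp_all add: ast_def)

lemma ast_sel2: "x \<noteq> LI \<Longrightarrow> snd (ast (asel x) x) = low (a_out (asel x)) \<and> ((snd (ast (asel x) x) = LY) = (x = LY))"
  by (cases x) (simp_all add: ast_def)

lemma zsucc:
  assumes z: "is_zcircuit n (ZC m a bs c)" and n: "length ps = n"
  shows "(gacts (zcirc_gates (ZC m a bs c)) (s, ps) = (False, LZ # replicate (n-1) LI)) \<longleftrightarrow>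
    (ok bs c (s \<noteq> fst (ast a (ps ! (m-1)))) (rev (take (m-1) ps)) (snd (ast a (ps ! (m-1)))) \<and> set (drop m ps) \<subseteq> {LI})"
proof -
  from z have m: "1 \<le> m" "m \<le> n" "length bs = m - 1" "types_ok (a_out a) bs c" by auto
  let ?x = "ps ! (m-1)"
  have zg: "zcirc_gates (ZC m a bs c) = a_gates a m @ tg bs m @ c_gates c 1" by (simp add: tg_def)
  have dec: "ps = take (m-1) ps @ [?x] @ drop m ps"
  proof -
    have "m - 1 < length ps" using m n by simp
    from id_take_nth_drop[OF this] have "ps = take (m-1) ps @ ?x # drop (Suc (m-1)) ps" .
    moreover have "Suc (m-1) = m" using m by simp
    ultimately show ?thesis by simp
  qed
  have A: "gacts (a_gates a m) (s, ps) = (s \<noteq> fst (ast a ?x), take (m-1) ps @ [snd (ast a ?x)] @ drop m ps)"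
  proof (cases a)
    case A2
    have "m - 1 < length ps" using m n by simp
    then have "ps[m-1 := snd (hact ?x)] = take (m-1) ps @ snd (hact ?x) # drop (Suc (m-1)) ps"
      by (rule upd_conv_take_nth_drop)
    moreover have "Suc (m-1) = m" using m by simp
    ultimately show ?thesis using A2 by (simp add: gacts_def ast_def)
  qed (use dec in \<open>simp_all add: gacts_def ast_def\<close>)
  have lr: "length (rev (take (m-1) ps)) = m - 1" using m n by simp
  have ms: "Suc (length (rev (take (m-1) ps))) = m" using lr m by simp
  have len: "length (rev (take (m-1) ps)) + length (drop m ps) = n - 1" using lr m n by simp
  have "gacts (zcirc_gates (ZC m a bs c)) (s, ps) =
    gacts (tg bs (Suc (length (rev (take (m-1) ps)))) @ c_gates c 1) (s \<noteq> fst (ast a ?x), rev (rev (take (m-1) ps)) @ [snd (ast a ?x)] @ drop m ps)"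
    unfolding zg gacts_append A ms by simp
  then show ?thesis
    using tail[of bs "rev (take (m-1) ps)" c "s \<noteq> fst (ast a ?x)" "snd (ast a ?x)" "drop m ps"] m(3) lr len by simp
qed

lemma nth_in_drop: "k \<le> j \<Longrightarrow> j < length ps \<Longrightarrow> ps ! j \<in> set (drop k ps)"
proof -
  assume "k \<le> j" "j < length ps"
  then have "drop k ps ! (j - k) = ps ! j" "j - k < length (drop k ps)" by auto
  then show ?thesis by (metis nth_mem)
qed

lemma char:
  assumes z: "is_zcircuit n (ZC m a bs c)" and n: "length ps = n"
    and S: "gacts (zcirc_gates (ZC m a bs c)) (s, ps) = (False, LZ # replicate (n-1) LI)"
  shows "ps ! (m-1) \<noteq> LI \<and> set (drop m ps) \<subseteq> {LI} \<and> a = asel (ps ! (m-1)) \<and>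
     ok bs c (s \<noteq> fst (ast a (ps ! (m-1)))) (rev (take (m-1) ps)) (low (a_out a))"
proof -
  from z have m: "1 \<le> m" "m \<le> n" "length bs = m - 1" "types_ok (a_out a) bs c" by auto
  let ?x = "ps ! (m-1)"
  from zsucc[OF z n] S have o: "ok bs c (s \<noteq> fst (ast a ?x)) (rev (take (m-1) ps)) (snd (ast a ?x))" and d: "set (drop m ps) \<subseteq> {LI}"
    by auto
  have lr: "length bs = length (rev (take (m-1) ps))" using m n by simp
  have "snd (ast a ?x) \<noteq> LI" using C2[OF lr] o by metis
  then have x: "?x \<noteq> LI" using ast_LI by simp
  have "snd (ast a ?x) = low (a_out a)"
    using C1[OF \<open>snd (ast a ?x) \<noteq> LI\<close> _ m(4) lr] o by blast
  with ast_sel[OF x this] o x d show ?thesis by simp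
qed

lemma yodd_append: "yodd (xs @ ys) = (yodd xs \<noteq> yodd ys)"
  unfolding yodd_def by auto

lemma yodd_rev: "yodd (rev xs) = yodd xs"
  unfolding yodd_def by (simp add: rev_filter[symmetric])

lemma yodd_LI: "set xs \<subseteq> {LI} \<Longrightarrow> \<not> yodd xs"
proof -
  assume "set xs \<subseteq> {LI}"
  then have "filter (\<lambda>x. x = LY) xs = []" by (auto simp: filter_empty_conv)
  then show ?thesis unfolding yodd_def by simp
qed

theorem abs_main:
  assumes n: "length ps = n" "1 \<le> n" and nz: "\<exists>x\<in>set ps. x \<noteq> LI" and ev: "\<not> yodd ps"
  shows "\<exists>!L. is_zcircuit n L \<and> gacts (zcirc_gates L) (s, ps) = (False, LZ # replicate (n-1) LI)"
proof -
 have ex: "\<exists>L. is_zcircuit n L \<and> gacts (zcirc_gates L) (s, ps) = (False, LZ # replicate (n-1) LI)"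
 proof -
  define S where "S = {i. i < n \<and> ps ! i \<noteq> LI}"
  have fin: "finite S" unfolding S_def by simp
  have ne: "S \<noteq> {}" using nz n unfolding S_def by (auto simp: in_set_conv_nth)
  define q where "q = Max S"
  have qS: "q \<in> S" unfolding q_def using fin ne by (rule Max_in)
  then have q: "q < n" "ps ! q \<noteq> LI" unfolding S_def by auto
  have above: "\<And>j. q < j \<Longrightarrow> j < n \<Longrightarrow> ps ! j = LI"
  proof (rule ccontr)
    fix j assume "q < j" "j < n" "ps ! j \<noteq> LI"
    then have "j \<in> S" unfolding S_def by auto
    then have "j \<le> q" unfolding q_def using fin by simp
    with \<open>q < j\<close> show False by simp
  qed
  have drop: "set (drop (q+1) ps) \<subseteq> {LI}"
  proof
    fix y assume "y \<in> set (drop (q+1) ps)"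
    then obtain k where "k < length (drop (q+1) ps)" "y = drop (q+1) ps ! k" by (auto simp: in_set_conv_nth)
    then have "y = ps ! (q + 1 + k)" "q + 1 + k < n" using n by auto
    then show "y \<in> {LI}" using above[of "q+1+k"] by simp
  qed
  let ?x = "ps ! q"
  define a where "a = asel ?x"
  have al: "snd (ast a ?x) = low (a_out a)" "(snd (ast a ?x) = LY) = (?x = LY)"
    using ast_sel2[OF q(2)] unfolding a_def by auto
  have dec: "ps = take q ps @ [?x] @ drop (q+1) ps"
    using id_take_nth_drop[of q ps] q n by simp
  have "yodd ps = (yodd (take q ps) \<noteq> (?x = LY))"
    using yodd_LI[OF drop] by (subst dec) (auto simp: yodd_append yodd_cons yodd_def)
  then have "\<not> yodd (snd (ast a ?x) # rev (take q ps))"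
    using ev al by (auto simp: yodd_cons yodd_rev)
  from C4[OF al(1) this] obtain bs c where
    bc: "types_ok (a_out a) bs c" "length bs = length (rev (take q ps))"
        "ok bs c (s \<noteq> fst (ast a ?x)) (rev (take q ps)) (snd (ast a ?x))"
    by blast
  let ?L = "ZC (q+1) a bs c"
  have z: "is_zcircuit n ?L" using bc q n by simp
  have "is_zcircuit n ?L \<and> gacts (zcirc_gates ?L) (s, ps) = (False, LZ # replicate (n-1) LI)"
    using z zsucc[OF z n(1)] bc drop by simp
  then show ?thesis by blast
 qed
 have un: "L1 = L2" if h1: "is_zcircuit n L1 \<and> gacts (zcirc_gates L1) (s, ps) = (False, LZ # replicate (n-1) LI)"
    and h2: "is_zcircuit n L2 \<and> gacts (zcirc_gates L2) (s, ps) = (False, LZ # replicate (n-1) LI)" for L1 L2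
 proof -
  obtain m1 a1 bs1 c1 where L1: "L1 = ZC m1 a1 bs1 c1" by (cases L1)
  obtain m2 a2 bs2 c2 where L2: "L2 = ZC m2 a2 bs2 c2" by (cases L2)
  have z1: "is_zcircuit n (ZC m1 a1 bs1 c1)" and z2: "is_zcircuit n (ZC m2 a2 bs2 c2)" using h1 h2 L1 L2 by auto
  have S1: "gacts (zcirc_gates (ZC m1 a1 bs1 c1)) (s, ps) = (False, LZ # replicate (n-1) LI)" using h1 unfolding L1 by blast
  have S2: "gacts (zcirc_gates (ZC m2 a2 bs2 c2)) (s, ps) = (False, LZ # replicate (n-1) LI)" using h2 unfolding L2 by blast
  note ch1 = char[OF z1 n(1) S1] and ch2 = char[OF z2 n(1) S2]
  have k1: "ps ! (m1-1) \<noteq> LI" "set (drop m1 ps) \<subseteq> {LI}" "a1 = asel (ps ! (m1-1))"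
    "ok bs1 c1 (s \<noteq> fst (ast a1 (ps ! (m1-1)))) (rev (take (m1-1) ps)) (low (a_out a1))"
    using ch1 by auto
  have k2: "ps ! (m2-1) \<noteq> LI" "set (drop m2 ps) \<subseteq> {LI}" "a2 = asel (ps ! (m2-1))"
    "ok bs2 c2 (s \<noteq> fst (ast a2 (ps ! (m2-1)))) (rev (take (m2-1) ps)) (low (a_out a2))"
    using ch2 by auto
  have zz: "1 \<le> m1" "m1 \<le> n" "length bs1 = m1 - 1" "types_ok (a_out a1) bs1 c1"
     "1 \<le> m2" "m2 \<le> n" "length bs2 = m2 - 1" "types_ok (a_out a2) bs2 c2" using z1 z2 by auto
  have mm: "m1 = m2"
  proof (rule ccontr)
    assume "m1 \<noteq> m2"
    then consider "m1 < m2" | "m2 < m1" by linarith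
    then show False
    proof cases
      case 1
      then have "ps ! (m2-1) \<in> set (drop m1 ps)" using zz n by (intro nth_in_drop) auto
      then show False using k1(2) k2(1) by auto
    next
      case 2
      then have "ps ! (m1-1) \<in> set (drop m2 ps)" using zz n by (intro nth_in_drop) auto
      then show False using k2(2) k1(1) by auto
    qed
  qed
  have aa: "a1 = a2" using k1(3) k2(3) mm by simp
  have "bs1 = bs2 \<and> c1 = c2"
    using C3[of "low (a_out a1)" "a_out a1" bs1 c1 bs2 c2 "rev (take (m1-1) ps)" "s \<noteq> fst (ast a1 (ps ! (m1-1)))"]
      k1(4) k2(4) zz mm aa n by simp
  then show "L1 = L2" using L1 L2 mm aa by simp
 qed
 show ?thesis using ex un by blast
qed


lemma pm_cons: "pm (s, x # ps) = kron (lmat x) (pm (s, ps))"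
  unfolding pm_def by (simp add: kron_smult_right)

lemma sm_one: "(1::real) \<cdot>\<^sub>m A = A" by (rule eq_matI) auto

lemma tl_sq: "tensor_list (map lmat ps) * tensor_list (map lmat ps) = sg (yodd ps) \<cdot>\<^sub>m 1\<^sub>m (2 ^ length ps)"
proof (induction ps)
  case Nil then show ?case by (simp add: sg_def yodd_def sm_one)
next
  case (Cons x ps)
  have "tensor_list (map lmat (x # ps)) * tensor_list (map lmat (x # ps)) =
     kron (lmat x * lmat x) (tensor_list (map lmat ps) * tensor_list (map lmat ps))"
    by (simp, rule kron_mult[OF lmat_c tl_lmat_c lmat_c tl_lmat_c])
  also have "\<dots> = kron (sg (x = LY) \<cdot>\<^sub>m 1\<^sub>m 2) (sg (yodd ps) \<cdot>\<^sub>m 1\<^sub>m (2 ^ length ps))"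
    using Cons lsq by simp
  also have "\<dots> = sg (yodd (x # ps)) \<cdot>\<^sub>m 1\<^sub>m (2 ^ length (x # ps))"
    by (simp add: kron_smult_left kron_smult_right kron_one smult_smult_mat yodd_cons sg_def)
  finally show ?case .
qed

lemma pm_sq: "pm (s, ps) * pm (s, ps) = sg (yodd ps) \<cdot>\<^sub>m 1\<^sub>m (2 ^ length ps)"
proof -
  have T: "tensor_list (map lmat ps) \<in> carrier_mat (2 ^ length ps) (2 ^ length ps)" by simp
  have "pm (s, ps) * pm (s, ps) = (sg s * sg s) \<cdot>\<^sub>m (tensor_list (map lmat ps) * tensor_list (map lmat ps))"
  proof -
    have cT: "sg s \<cdot>\<^sub>m tensor_list (map lmat ps) \<in> carrier_mat (2 ^ length ps) (2 ^ length ps)" using T by simp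
    show ?thesis unfolding pm_def fst_conv snd_conv
      by (simp only: mult_smult_distrib[OF cT T] mult_smult_assoc_mat[OF T T] smult_smult_mat)
  qed
  also have "sg s * sg s = 1" by (simp add: sg_def)
  finally show ?thesis using tl_sq by (simp add: sm_one)
qed

lemma pm_nz: "pm (s, ps) \<noteq> 0\<^sub>m (2 ^ length ps) (2 ^ length ps)"
proof
  assume "pm (s, ps) = 0\<^sub>m (2 ^ length ps) (2 ^ length ps)"
  then have "pm (s, ps) * pm (s, ps) = 0\<^sub>m (2 ^ length ps) (2 ^ length ps)" by simp
  then have "(sg (yodd ps) \<cdot>\<^sub>m 1\<^sub>m (2 ^ length ps)) $$ (0,0) = (0\<^sub>m (2 ^ length ps) (2 ^ length ps) :: real mat) $$ (0,0)"
    using pm_sq by metis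
  then show False by (simp add: sg_def split: if_splits)
qed

lemma kron_block:
  assumes A: "A \<in> carrier_mat 2 2" and B: "B \<in> carrier_mat k k" and C: "C \<in> carrier_mat 2 2" and D: "D \<in> carrier_mat k k"
    and e: "kron A B = kron C D" and u: "u < 2" and v: "v < 2"
  shows "A $$ (u,v) \<cdot>\<^sub>m B = C $$ (u,v) \<cdot>\<^sub>m D"
proof (rule eq_matI)
  fix i j assume "i < dim_row (C $$ (u,v) \<cdot>\<^sub>m D)" "j < dim_col (C $$ (u,v) \<cdot>\<^sub>m D)"
  then have i: "i < k" and j: "j < k" using D by auto
  have i2: "u * k + i < 2 * k" using u i by (cases u) auto
  have j2: "v * k + j < 2 * k" using v j by (cases v) auto
  have dm: "(u * k + i) div k = u" "(u * k + i) mod k = i" "(v * k + j) div k = v" "(v * k + j) mod k = j"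
    using i j by auto
  have "kron A B $$ (u * k + i, v * k + j) = kron C D $$ (u * k + i, v * k + j)" using e by simp
  then have "A $$ (u,v) * B $$ (i,j) = C $$ (u,v) * D $$ (i,j)"
    using A B C D i2 j2 i j by (simp add: kron_index dm)
  then show "(A $$ (u,v) \<cdot>\<^sub>m B) $$ (i,j) = (C $$ (u,v) \<cdot>\<^sub>m D) $$ (i,j)" using B D i j by simp
qed (use B D in auto)

lemma lmat_le: "u < 2 \<Longrightarrow> v < 2 \<Longrightarrow> lmat x $$ (u,v) = le x u v"
  by (simp add: lmat_eq)

lemma sm_neg: "(-1::real) \<cdot>\<^sub>m pm (s, ps) = pm (\<not> s, ps)"
  unfolding pm_def by (simp add: smult_smult_mat sg_def)
lemma sm_zero: "A \<in> carrier_mat k k \<Longrightarrow> (0::real) \<cdot>\<^sub>m A = 0\<^sub>m k k" by (rule eq_matI) auto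

lemma pm_inj: "length ps1 = length ps2 \<Longrightarrow> pm (s1, ps1) = pm (s2, ps2) \<Longrightarrow> s1 = s2 \<and> ps1 = ps2"
proof (induction ps1 arbitrary: s1 s2 ps2)
  case Nil
  then show ?case by (auto simp: pm_def sg_def dest!: arg_cong[where f="\<lambda>M. M $$ (0,0)"] split: if_splits)
next
  case (Cons x ps1)
  then obtain y ps2' where p2: "ps2 = y # ps2'" by (cases ps2) auto
  have len: "length ps1 = length ps2'" using Cons.prems p2 by simp
  let ?K = "2 ^ length ps1"
  have c1: "pm (s1, ps1) \<in> carrier_mat ?K ?K" using pm_c[of "(s1, ps1)"] by simp
  have c2: "pm (s2, ps2') \<in> carrier_mat ?K ?K" using pm_c[of "(s2, ps2')"] len by simp
  have e: "kron (lmat x) (pm (s1, ps1)) = kron (lmat y) (pm (s2, ps2'))"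
    using Cons.prems p2 by (simp add: pm_cons)
  have blk: "\<And>u v. u < 2 \<Longrightarrow> v < 2 \<Longrightarrow> le x u v \<cdot>\<^sub>m pm (s1, ps1) = le y u v \<cdot>\<^sub>m pm (s2, ps2')"
    using kron_block[OF lmat_c c1 lmat_c c2 e] lmat_le by metis
  have b00: "le x 0 0 \<cdot>\<^sub>m pm (s1, ps1) = le y 0 0 \<cdot>\<^sub>m pm (s2, ps2')" using blk by simp
  have b01: "le x 0 1 \<cdot>\<^sub>m pm (s1, ps1) = le y 0 1 \<cdot>\<^sub>m pm (s2, ps2')" using blk by simp
  have b10: "le x 1 0 \<cdot>\<^sub>m pm (s1, ps1) = le y 1 0 \<cdot>\<^sub>m pm (s2, ps2')" using blk by simp
  have b11: "le x 1 1 \<cdot>\<^sub>m pm (s1, ps1) = le y 1 1 \<cdot>\<^sub>m pm (s2, ps2')" using blk by simp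
  have nz1: "pm (s1, ps1) \<noteq> 0\<^sub>m ?K ?K" by (rule pm_nz)
  have nz2: "pm (s2, ps2') \<noteq> 0\<^sub>m ?K ?K" using pm_nz[of s2 ps2'] len by simp
  have IH: "\<And>t1 t2. pm (t1, ps1) = pm (t2, ps2') \<Longrightarrow> t1 = t2 \<and> ps1 = ps2'"
    using Cons.IH len by blast
  note sms = sm_one sm_neg sm_zero[OF c1] sm_zero[OF c2]
  show ?case
    using b00 b01 b10 b11 nz1 nz2 IH[of s1 s2] IH[of "\<not> s1" s2] IH[of s1 "\<not> s2"] IH[of "\<not> s1" "\<not> s2"] p2
    by (cases x; cases y; simp add: sms; metis)
qed


lemma tl_rep: "tensor_list (replicate k (1\<^sub>m 2)) = 1\<^sub>m (2 ^ k)"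
  by (induction k) (simp_all add: kron_one)

lemma pauli_pm: "P \<in> pauli_group n \<Longrightarrow> \<exists>s ps. length ps = n \<and> P = pm (s, ps)"
proof -
  assume "P \<in> pauli_group n"
  then obtain c Ps where h: "P = c \<cdot>\<^sub>m tensor_list Ps" "c \<in> {1, -1}" "length Ps = n" "set Ps \<subseteq> {1\<^sub>m 2, Xm, Zm, Xm * Zm}"
    unfolding pauli_group_def by blast
  have "\<forall>y\<in>set Ps. \<exists>x. y = lmat x"
  proof
    fix y assume "y \<in> set Ps"
    then have "y \<in> {1\<^sub>m 2, Xm, Zm, Xm * Zm}" using h by auto
    then show "\<exists>x. y = lmat x" by (metis insert_iff empty_iff lmat.simps)
  qed
  then obtain ps where ps: "Ps = map lmat ps" by (metis ex_map_conv)
  have "c = sg (c = -1)" using h(2) by (auto simp: sg_def)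
  then have "P = pm (c = -1, ps)" unfolding pm_def using h ps by simp
  moreover have "length ps = n" using h ps by simp
  ultimately show ?thesis by blast
qed

lemma target: "kron Zm (1\<^sub>m (2^(n-1))) = pm (False, LZ # replicate (n-1) LI)"
  unfolding pm_def by (simp add: tl_rep sg_def sm_one)

lemma bg_valid: "1 \<le> i \<Longrightarrow> i + 1 \<le> n \<Longrightarrow> g \<in> set (b_gates b i) \<Longrightarrow> valid n g"
  by (cases b) auto

lemma zc_valid: "is_zcircuit n L \<Longrightarrow> \<forall>g\<in>set (zcirc_gates L). valid n g"
proof (cases L)
  case (ZC m a bs c)
  assume z: "is_zcircuit n L"
  then have m: "1 \<le> m" "m \<le> n" "length bs = m - 1" using ZC by auto
  show ?thesis
  proof
    fix g assume "g \<in> set (zcirc_gates L)"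
    then consider "g \<in> set (a_gates a m)" | "g \<in> set (c_gates c 1)"
      | k where "k < length bs" "g \<in> set (b_gates (bs ! k) (m - 1 - k))"
      using ZC by auto
    then show "valid n g"
    proof cases
      case 1 then show ?thesis using m by (cases a) auto
    next
      case 2 then show ?thesis using m by (cases c) auto
    next
      case 3 then show ?thesis using m by (intro bg_valid[of "m - 1 - k" n g "bs ! k"]) auto
    qed
  qed
qed

theorem proposition4p11:
  fixes n :: nat and P :: "real mat"
  assumes "n \<ge> 1"
    and "P \<in> pauli_group n"
    and "P * P = 1\<^sub>m (2^n)"
    and "P \<noteq> 1\<^sub>m (2^n)" and "P \<noteq> - 1\<^sub>m (2^n)"
  shows "\<exists>!L. is_zcircuit n L \<and>
           conj_mat (zcirc_op n L) P = kron Zm (1\<^sub>m (2^(n-1)))"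
proof -
  obtain s ps where sp: "length ps = n" "P = pm (s, ps)" using pauli_pm[OF assms(2)] by blast
  have ev: "\<not> yodd ps"
  proof
    assume y: "yodd ps"
    have "P * P = (-1) \<cdot>\<^sub>m 1\<^sub>m (2^n)" using pm_sq[of s ps] sp y by (simp add: sg_def)
    then have "((-1::real) \<cdot>\<^sub>m 1\<^sub>m (2^n)) $$ (0,0) = (1\<^sub>m (2^n) :: real mat) $$ (0,0)" using assms(3) by simp
    then show False by simp
  qed
  have nz: "\<exists>x\<in>set ps. x \<noteq> LI"
  proof (rule ccontr)
    assume "\<not> (\<exists>x\<in>set ps. x \<noteq> LI)"
    then have "ps = replicate n LI" using sp(1) by (metis rep_iff subset_singletonD subsetI insertI1 singletonI
       subset_singleton_iff empty_iff) 
    then have "P = sg s \<cdot>\<^sub>m 1\<^sub>m (2^n)" using sp unfolding pm_def by (simp add: tl_rep)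
    moreover have "- 1\<^sub>m (2^n) = (-1::real) \<cdot>\<^sub>m 1\<^sub>m (2^n)" by (rule eq_matI) auto
    ultimately show False using assms(4,5) by (cases s) (auto simp: sg_def sm_one)
  qed
  have eqv: "conj_mat (zcirc_op n L) P = kron Zm (1\<^sub>m (2^(n-1))) \<longleftrightarrow>
       gacts (zcirc_gates L) (s, ps) = (False, LZ # replicate (n-1) LI)" if z: "is_zcircuit n L" for L
  proof -
    have v: "\<forall>g\<in>set (zcirc_gates L). valid (length ps) g"
      using zc_valid[OF z] sp(1) by simp
    have "conj_mat (zcirc_op n L) P = pm (gacts (zcirc_gates L) (s, ps))"
      unfolding conj_mat_def zcirc_op_def inv_mat_cop[OF v[unfolded sp(1)]] sp(2)
      using conj_cop[OF v] sp(1) by simp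
    moreover obtain s' ps' where g: "gacts (zcirc_gates L) (s, ps) = (s', ps')" by (cases "gacts (zcirc_gates L) (s, ps)")
    moreover have len: "length ps' = length (LZ # replicate (n-1) LI)"
      using gacts_len[of "zcirc_gates L" "(s, ps)"] g sp(1) assms(1) by simp
    moreover have "pm (s', ps') = pm (False, LZ # replicate (n-1) LI) \<longleftrightarrow> (s', ps') = (False, LZ # replicate (n-1) LI)"
      using pm_inj[OF len] by auto
    ultimately show ?thesis unfolding target by simp
  qed
  have "\<exists>!L. is_zcircuit n L \<and> gacts (zcirc_gates L) (s, ps) = (False, LZ # replicate (n-1) LI)"
    using abs_main[OF sp(1) assms(1) nz ev] .
  then show ?thesis using eqv by metis
qed


end
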